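(* Let $d\geqslant 4$ be an even integer and let $r$ be an integer with $\gcd(d,r)=1$. Let $n>1$ be an integer with $n\equiv -r\pmod{d}$ and $n\geqslant \max\{r,d-r\}$. Then \[ \sum_{k=0}^{n-1}[2dk+r]\frac{(q^r;q^d)_k^d}{(q^d;q^d)_k^d}q^{\frac{d(d-r-2)k}{2}} \equiv 0\pmod{\Phi_n(q)^2}. \]
   Context: $q$ is an indeterminate. The $q$-shifted factorial is $(a;q)_k=(1-a)(1-aq)\cdots(1-aq^{k-1})$ (with $(a;q)_0=1$), for any Laurent monomial $a$ in $q$. For any integer $m$ (including negative $m$), $[m]=(1-q^m)/(1-q)$. $\Phi_n(q)$ denotes the $n$-th cyclotomic polynomial. A congruence of rational functions modulo a polynomial $P(q)$, where the denominators are coprime to $P(q)$, means that $P(q)$ divides the numerator of the difference in lowest terms. *)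

theory Defs
  imports "HOL-Computational_Algebra.Computational_Algebra" "HOL-Number_Theory.Cong" Complex_Main
begin

type_synonym ratfun = "complex poly fract"

definition qv :: ratfun where
  "qv = Fract [:0, 1:] 1"

definition qpoch :: "'a::comm_ring_1 \<Rightarrow> 'a \<Rightarrow> nat \<Rightarrow> 'a" where
  "qpoch a b k = (\<Prod>j<k. (1 - a * b ^ j))"

definition qint :: "int \<Rightarrow> ratfun" where
  "qint m = (1 - qv powi m) / (1 - qv)"

definition cyclo :: "nat \<Rightarrow> complex poly" where
  "cyclo n = (\<Prod>k\<in>{k. 1 \<le> k \<and> k \<le> n \<and> coprime k n}.
               [:- cis (2 * pi * real k / real n), 1:])"

text \<open>Congruence of rational functions modulo a polynomial P: the difference can be written
  as A/B with B coprime to P and P dividing A (equivalently, P divides the numerator in lowest terms).\<close>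
definition fcong :: "ratfun \<Rightarrow> ratfun \<Rightarrow> complex poly \<Rightarrow> bool" where
  "fcong S T P \<longleftrightarrow> (\<exists>A B. B \<noteq> 0 \<and> coprime B P \<and> P dvd A \<and> S - T = Fract A B)"

end

theory Submission
  imports Defs
begin


lemma cis_eq_1_imp:
  assumes "cis x = 1" shows "\<exists>m::int. x = of_int m * 2 * pi"
proof -
  have "cos x = 1" using assms by (metis Re_complex_of_real cis.sel(1) one_complex.sel(1))
  then show ?thesis by (simp add: cos_one_2pi_int)
qed

lemma cis_eq_cis_imp:
  assumes "cis a = cis b" shows "\<exists>m::int. a - b = of_int m * 2 * pi"
proof -
  have "cis (a - b) = cis a * cis (- b)" by (simp add: cis_mult)
  also have "\<dots> = 1" using assms by (simp add: cis_mult)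
  finally show ?thesis by (rule cis_eq_1_imp)
qed

definition zroot :: "nat \<Rightarrow> nat \<Rightarrow> complex" where
  "zroot n k = cis (2 * pi * real k / real n)"

lemma zroot_pow: "zroot n k ^ e = cis (2 * pi * real (k * e) / real n)"
  unfolding zroot_def DeMoivre by (simp add: field_simps)

lemma zroot_pow_eq1: assumes "n > 0" "n dvd e" shows "zroot n k ^ e = 1"
proof -
  obtain t where e: "e = n * t" using assms by auto
  have "2 * pi * real (k * e) / real n = 2 * pi * real (k * t)" using assms(1) e by (simp add: field_simps)
  then show ?thesis unfolding zroot_pow by (simp add: cis_multiple_2pi)
qed

lemma zroot_pow_ne1: assumes "n > 0" "coprime k n" "\<not> n dvd e" shows "zroot n k ^ e \<noteq> 1"
proof
  assume "zroot n k ^ e = 1"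
  then obtain m :: int where m: "2 * pi * real (k * e) / real n = of_int m * 2 * pi"
    unfolding zroot_pow using cis_eq_1_imp by blast
  then have "real (k * e) = of_int m * real n" using assms(1) by (simp add: field_simps)
  then have "int (k * e) = m * int n" by (metis of_int_eq_iff of_int_mult of_int_of_nat_eq)
  then have "int n dvd int (k * e)" by simp
  then have "n dvd k * e" by presburger
  then have "n dvd e" using assms(2) by (metis coprime_commute coprime_dvd_mult_right_iff)
  with assms(3) show False by simp
qed

lemma zroot_inj: assumes "n > 0" shows "inj_on (zroot n) {1..n}"
proof (rule inj_onI)
  fix k j assume kj: "k \<in> {1..n}" "j \<in> {1..n}" "zroot n k = zroot n j"
  then obtain m :: int where m: "2 * pi * real k / real n - 2 * pi * real j / real n = of_int m * 2 * pi"
    unfolding zroot_def using cis_eq_cis_imp by blast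
  have "real k - real j = (2 * pi * real k / real n - 2 * pi * real j / real n) * real n / (2 * pi)"
    using assms by (simp add: field_simps)
  also have "\<dots> = of_int m * real n" unfolding m by simp
  finally have eq0: "real k - real j = of_int m * real n" .
  then have eq: "int k - int j = m * int n" by (metis of_int_eq_iff of_int_mult of_int_of_nat_eq of_int_diff)
  have "m = 0"
  proof (rule ccontr)
    assume "m \<noteq> 0"
    then have "\<bar>m * int n\<bar> \<ge> int n" using assms by (simp add: abs_mult mult_le_cancel_right1)
    moreover have "\<bar>int k - int j\<bar> < int n" using kj by auto
    ultimately show False using eq by simp
  qed
  then show "k = j" using eq by simp
qed

lemma cyclo_eq: "cyclo n = (\<Prod>k\<in>{k. 1 \<le> k \<and> k \<le> n \<and> coprime k n}. [:- zroot n k, 1:])"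
  unfolding cyclo_def zroot_def by (rule refl)

lemma coprime_of_roots:
  fixes B Q :: "complex poly"
  assumes "Q \<noteq> 0" "\<And>w. poly Q w = 0 \<Longrightarrow> poly B w \<noteq> 0"
  shows "coprime B Q"
proof (rule coprimeI)
  fix c assume c: "c dvd B" "c dvd Q"
  have "c \<noteq> 0" using c(2) assms(1) by auto
  have "degree c = 0"
  proof (rule ccontr)
    assume "degree c \<noteq> 0"
    then have "\<not> constant (poly c)" by (simp add: constant_degree)
    then obtain w where w: "poly c w = 0" using fundamental_theorem_of_algebra by blast
    have "poly Q w = 0" using c(2) w by (metis dvd_def mult_eq_0_iff poly_mult)
    moreover have "poly B w = 0" using c(1) w by (metis dvd_def mult_eq_0_iff poly_mult)
    ultimately show False using assms(2) by blast
  qed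
  then show "is_unit c" using \<open>c \<noteq> 0\<close> by (simp add: is_unit_iff_degree)
qed

lemma cyclo_root:
  assumes "poly (cyclo n) w = 0"
  shows "\<exists>k. 1 \<le> k \<and> k \<le> n \<and> coprime k n \<and> w = zroot n k"
proof -
  have "(\<Prod>k\<in>{k. 1 \<le> k \<and> k \<le> n \<and> coprime k n}. poly [:- zroot n k, 1:] w) = 0"
    using assms unfolding cyclo_eq by (simp add: poly_prod)
  then obtain k where "k \<in> {k. 1 \<le> k \<and> k \<le> n \<and> coprime k n}" "poly [:- zroot n k, 1:] w = 0"
    by (auto simp: prod_zero_iff)
  then show ?thesis by auto
qed

lemma cyclo_ne0: "cyclo n \<noteq> 0"
  unfolding cyclo_eq by (auto simp: prod_zero_iff)

lemma prod_linear_dvd: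
  fixes z :: "nat \<Rightarrow> complex" and P :: "complex poly"
  assumes "finite S" "inj_on z S" "\<And>k. k \<in> S \<Longrightarrow> poly P (z k) = 0"
  shows "(\<Prod>k\<in>S. [:- z k, 1:]) dvd P"
  using assms
proof (induction S arbitrary: P rule: finite_induct)
  case empty then show ?case by simp
next
  case (insert k S)
  have "poly P (z k) = 0" using insert by auto
  then have "[:- z k, 1:] dvd P" by (simp add: poly_eq_0_iff_dvd)
  then obtain P' where P: "P = [:- z k, 1:] * P'" by (rule dvdE)
  have "poly P' (z j) = 0" if "j \<in> S" for j
  proof -
    have "z j \<noteq> z k"
    proof
      assume "z j = z k"
      then have "j = k" using inj_onD[OF insert.prems(1)] that by auto
      then show False using insert.hyps(2) that by simp
    qed
    moreover have "poly P (z j) = 0" using insert.prems(2) that by auto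
    ultimately show ?thesis using P by simp
  qed
  then have "(\<Prod>k\<in>S. [:- z k, 1:]) dvd P'" using insert by (auto simp: inj_on_insert)
  then have "[:- z k, 1:] * (\<Prod>k\<in>S. [:- z k, 1:]) dvd [:- z k, 1:] * P'" by (rule mult_dvd_mono[OF dvd_refl])
  moreover have "(\<Prod>k\<in>insert k S. [:- z k, 1:]) = [:- z k, 1:] * (\<Prod>k\<in>S. [:- z k, 1:])"
    by (rule prod.insert[OF insert.hyps(1,2)])
  ultimately show ?case using P by simp
qed

lemma cyclo_dvd: fixes P :: "complex poly" assumes "n > 0" "\<And>k. 1 \<le> k \<Longrightarrow> k \<le> n \<Longrightarrow> coprime k n \<Longrightarrow> poly P (zroot n k) = 0"
  shows "cyclo n dvd P"
  unfolding cyclo_eq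
proof (rule prod_linear_dvd)
  show "finite {k. 1 \<le> k \<and> k \<le> n \<and> coprime k n}" by simp
  show "inj_on (zroot n) {k. 1 \<le> k \<and> k \<le> n \<and> coprime k n}"
    by (rule inj_on_subset[OF zroot_inj[OF assms(1)]]) auto
  show "poly P (zroot n k) = 0" if "k \<in> {k. 1 \<le> k \<and> k \<le> n \<and> coprime k n}" for k
    using that assms(2) by simp
qed

lemma zroot_ne0: "zroot n k \<noteq> 0" unfolding zroot_def by (metis cis_neq_zero)

lemma cyclo_dvd_pow: assumes "n > 0" "n dvd e" shows "cyclo n dvd (1 - [:0,1:] ^ e)"
proof (rule cyclo_dvd[OF assms(1)])
  fix k show "poly (1 - [:0,1:] ^ e) (zroot n k) = 0" using zroot_pow_eq1[OF assms] by simp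
qed


section \<open>Localization at the cyclotomic polynomial\<close>

definition gd :: "nat \<Rightarrow> complex poly \<Rightarrow> bool" where
  "gd n B \<longleftrightarrow> B \<noteq> 0 \<and> (\<forall>w. poly (cyclo n) w = 0 \<longrightarrow> poly B w \<noteq> 0)"

definition DD :: "nat \<Rightarrow> nat \<Rightarrow> ratfun \<Rightarrow> bool" where
  "DD n k x \<longleftrightarrow> (\<exists>A B. gd n B \<and> cyclo n ^ k dvd A \<and> x = Fract A B)"

definition UU :: "nat \<Rightarrow> ratfun \<Rightarrow> bool" where
  "UU n x \<longleftrightarrow> (\<exists>A B. gd n A \<and> gd n B \<and> x = Fract A B)"

lemma gd_mult: "gd n A \<Longrightarrow> gd n B \<Longrightarrow> gd n (A * B)"
  unfolding gd_def by (auto simp: poly_mult)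

lemma gd_1: "gd n 1" unfolding gd_def by simp

lemma DD_add: assumes "DD n k x" "DD n k y" shows "DD n k (x + y)"
proof -
  obtain A B where 1: "gd n B" "cyclo n ^ k dvd A" "x = Fract A B" using assms(1) unfolding DD_def by blast
  obtain C D where 2: "gd n D" "cyclo n ^ k dvd C" "y = Fract C D" using assms(2) unfolding DD_def by blast
  have "B \<noteq> 0" "D \<noteq> 0" using 1 2 unfolding gd_def by auto
  then have "x + y = Fract (A * D + C * B) (B * D)" using 1 2 by simp
  moreover have "gd n (B * D)" using 1 2 by (simp add: gd_mult)
  moreover have "cyclo n ^ k dvd A * D + C * B" using 1 2 by simp
  ultimately show ?thesis unfolding DD_def by blast
qed

lemma DD_uminus: assumes "DD n k x" shows "DD n k (- x)"
proof -
  obtain A B where 1: "gd n B" "cyclo n ^ k dvd A" "x = Fract A B" using assms(1) unfolding DD_def by blast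
  then have "- x = Fract (- A) B" by simp
  then show ?thesis using 1 unfolding DD_def by (metis dvd_minus_iff)
qed

lemma DD_diff: "DD n k x \<Longrightarrow> DD n k y \<Longrightarrow> DD n k (x - y)"
  using DD_add[of n k x "- y"] DD_uminus[of n k y] by simp

lemma DD_mult: assumes "DD n k x" "DD n l y" shows "DD n (k + l) (x * y)"
proof -
  obtain A B where 1: "gd n B" "cyclo n ^ k dvd A" "x = Fract A B" using assms(1) unfolding DD_def by blast
  obtain C D where 2: "gd n D" "cyclo n ^ l dvd C" "y = Fract C D" using assms(2) unfolding DD_def by blast
  have "x * y = Fract (A * C) (B * D)" using 1 2 by simp
  moreover have "gd n (B * D)" using 1 2 by (simp add: gd_mult)
  moreover have "cyclo n ^ (k + l) dvd A * C" using 1 2 by (simp add: power_add mult_dvd_mono)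
  ultimately show ?thesis unfolding DD_def by blast
qed

lemma DD_mono: assumes "DD n k x" "l \<le> k" shows "DD n l x"
proof -
  obtain A B where 1: "gd n B" "cyclo n ^ k dvd A" "x = Fract A B" using assms(1) unfolding DD_def by blast
  have "cyclo n ^ l dvd cyclo n ^ k" using assms(2) by (simp add: le_imp_power_dvd)
  then have "cyclo n ^ l dvd A" using 1(2) by (rule dvd_trans)
  then show ?thesis using 1 unfolding DD_def by blast
qed

lemma DD_zero: "DD n k 0"
  unfolding DD_def by (rule exI[of _ 0], rule exI[of _ 1]) (simp add: gd_1 fract_collapse)

lemma DD_one: "DD n 0 1"
  unfolding DD_def by (rule exI[of _ 1], rule exI[of _ 1]) (simp add: gd_1 fract_collapse)

lemma DD_sum: "(\<And>i. i \<in> S \<Longrightarrow> DD n k (f i)) \<Longrightarrow> DD n k (\<Sum>i\<in>S. f i)"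
  by (induction S rule: infinite_finite_induct) (auto simp: DD_zero DD_add)

lemma DD_prod0: "(\<And>i. i \<in> S \<Longrightarrow> DD n 0 (f i)) \<Longrightarrow> DD n 0 (\<Prod>i\<in>S. f i)"
proof (induction S rule: infinite_finite_induct)
  case (insert x F)
  then show ?case using DD_mult[of n 0 "f x" 0 "prod f F"] by simp
qed (auto simp: DD_one)

lemma DD_prod1:
  assumes "finite S" "j \<in> S" "DD n k (f j)" "\<And>i. i \<in> S \<Longrightarrow> DD n 0 (f i)"
  shows "DD n k (\<Prod>i\<in>S. f i)"
proof -
  have "(\<Prod>i\<in>S. f i) = f j * (\<Prod>i\<in>S - {j}. f i)" using assms(1,2) by (rule prod.remove)
  moreover have "DD n 0 (\<Prod>i\<in>S - {j}. f i)" using assms(4) by (intro DD_prod0) auto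
  ultimately show ?thesis using DD_mult[OF assms(3)] by fastforce
qed

lemma DD_power: "DD n k x \<Longrightarrow> DD n (k * m) (x ^ m)"
proof (induction m)
  case 0 then show ?case by (simp add: DD_one)
next
  case (Suc m)
  then show ?case using DD_mult[of n k x "k * m" "x ^ m"] by (simp add: add.commute)
qed

lemma UU_DD: assumes "UU n x" shows "DD n 0 x"
proof -
  obtain A B where 1: "gd n A" "gd n B" "x = Fract A B" using assms(1) unfolding UU_def by blast
  then show ?thesis unfolding DD_def by (intro exI[of _ A] exI[of _ B]) simp
qed

lemma UU_mult: assumes "UU n x" "UU n y" shows "UU n (x * y)"
proof -
  obtain A B where 1: "gd n A" "gd n B" "x = Fract A B" using assms(1) unfolding UU_def by blast
  obtain C D where 2: "gd n C" "gd n D" "y = Fract C D" using assms(2) unfolding UU_def by blast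
  have "x * y = Fract (A * C) (B * D)" using 1 2 by simp
  then show ?thesis unfolding UU_def using 1 2 gd_mult by blast
qed

lemma UU_inverse: assumes "UU n x" shows "UU n (inverse x)"
proof -
  obtain A B where 1: "gd n A" "gd n B" "x = Fract A B" using assms(1) unfolding UU_def by blast
  have "inverse x = Fract B A" using 1 by simp
  then show ?thesis unfolding UU_def using 1 by blast
qed

lemma UU_divide: assumes "UU n x" "UU n y" shows "UU n (x / y)"
  using UU_mult[OF assms(1) UU_inverse[OF assms(2)]] by (simp add: divide_inverse)

lemma UU_one: "UU n 1"
  unfolding UU_def by (rule exI[of _ 1], rule exI[of _ 1]) (simp add: gd_1 fract_collapse)

lemma UU_prod: "(\<And>i. i \<in> S \<Longrightarrow> UU n (f i)) \<Longrightarrow> UU n (\<Prod>i\<in>S. f i)"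
  by (induction S rule: infinite_finite_induct) (auto simp: UU_one UU_mult)

lemma UU_power: "UU n x \<Longrightarrow> UU n (x ^ m)"
  by (induction m) (auto simp: UU_one UU_mult)

lemma UU_ne0: assumes "UU n x" shows "x \<noteq> 0"
proof -
  obtain A B where 1: "gd n A" "gd n B" "x = Fract A B" using assms(1) unfolding UU_def by blast
  then have "A \<noteq> 0" "B \<noteq> 0" unfolding gd_def by auto
  then show ?thesis using 1(3) by (simp add: Zero_fract_def eq_fract)
qed

lemma DD_inverse_cong:
  assumes "UU n x" "UU n y" "DD n k (x - y)"
  shows "DD n k (inverse x - inverse y)"
proof -
  have "inverse x - inverse y = (y - x) * (inverse x * inverse y)"
    using UU_ne0[OF assms(1)] UU_ne0[OF assms(2)] by (simp add: divide_simps)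
  moreover have "DD n k (y - x)" using DD_uminus[OF assms(3)] by simp
  moreover have "DD n 0 (inverse x * inverse y)" by (intro UU_DD UU_mult UU_inverse assms)
  ultimately show ?thesis using DD_mult[of n k "y - x" 0] by simp
qed

lemma DD_fcong:
  assumes "n > 0" "DD n 2 x"
  shows "fcong x 0 ((cyclo n)\<^sup>2)"
proof -
  obtain A B where 1: "gd n B" "cyclo n ^ 2 dvd A" "x = Fract A B" using assms(2) unfolding DD_def by blast
  have "coprime B ((cyclo n)\<^sup>2)"
  proof (rule coprime_of_roots)
    show "(cyclo n)\<^sup>2 \<noteq> 0" by (simp add: cyclo_ne0)
    fix w assume "poly ((cyclo n)\<^sup>2) w = 0"
    then have "poly (cyclo n) w = 0" by simp
    then show "poly B w \<noteq> 0" using 1 unfolding gd_def by blast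
  qed
  moreover have "B \<noteq> 0" using 1 unfolding gd_def by simp
  ultimately show ?thesis unfolding fcong_def using 1 by (intro exI[of _ A] exI[of _ B]) simp
qed


abbreviation pX :: "complex poly" where "pX \<equiv> [:0, 1:]"

lemma qv_pow: "qv ^ m = Fract (pX ^ m) 1"
  by (induction m) (simp_all add: qv_def One_fract_def)

lemma qv_powi_nonneg: "0 \<le> e \<Longrightarrow> qv powi e = Fract (pX ^ nat e) 1"
  by (metis nat_0_le power_int_of_nat qv_pow)

lemma qv_powi_neg: assumes "e < 0" shows "qv powi e = Fract 1 (pX ^ nat (- e))"
proof -
  have "qv powi e = inverse (qv powi (- e))" using power_int_minus[of qv "- e"] by simp
  also have "\<dots> = inverse (Fract (pX ^ nat (- e)) 1)" using assms by (simp add: qv_powi_nonneg)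
  finally show ?thesis by simp
qed

lemma cyclo_root_ne0: "poly (cyclo n) w = 0 \<Longrightarrow> w \<noteq> 0"
  by (metis cyclo_root zroot_ne0)

lemma gd_Xpow: "gd n (pX ^ m)"
  unfolding gd_def using cyclo_root_ne0 by (auto simp: poly_power)

lemma UU_qv_powi: "UU n (qv powi e)"
  unfolding UU_def
proof (cases "0 \<le> e")
  case True
  then show "\<exists>A B. gd n A \<and> gd n B \<and> qv powi e = Fract A B"
    using qv_powi_nonneg[OF True] gd_Xpow gd_1 by blast
next
  case False
  then show "\<exists>A B. gd n A \<and> gd n B \<and> qv powi e = Fract A B"
    using qv_powi_neg[of e] gd_Xpow gd_1 by auto
qed

lemma one_minus_qv_powi:
  "1 - qv powi e = (if 0 \<le> e then Fract (1 - pX ^ nat e) 1 else Fract (pX ^ nat (- e) - 1) (pX ^ nat (- e)))"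
proof (cases "0 \<le> e")
  case True
  then show ?thesis by (simp add: qv_powi_nonneg One_fract_def)
next
  case False
  have "pX ^ nat (- e) \<noteq> 0" by simp
  then show ?thesis using False by (simp add: qv_powi_neg One_fract_def)
qed

lemma DD0_one_minus: "DD n 0 (1 - qv powi e)"
proof (cases "0 \<le> e")
  case True
  then show ?thesis unfolding one_minus_qv_powi DD_def
    by (intro exI[of _ "1 - pX ^ nat e"] exI[of _ 1]) (simp add: gd_1)
next
  case False
  then show ?thesis unfolding one_minus_qv_powi DD_def
    by (intro exI[of _ "pX ^ nat (- e) - 1"] exI[of _ "pX ^ nat (- e)"]) (simp add: gd_Xpow)
qed

lemma DD1_one_minus:
  assumes "n > 0" "int n dvd e" shows "DD n 1 (1 - qv powi e)"
proof (cases "0 \<le> e")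
  case True
  then have "int (nat e) = e" by simp
  then have "n dvd nat e" using assms(2) by (metis int_dvd_int_iff)
  then have "cyclo n dvd (1 - pX ^ nat e)" using cyclo_dvd_pow[OF assms(1)] by blast
  then show ?thesis unfolding one_minus_qv_powi DD_def using True gd_1 by auto
next
  case False
  then have "int (nat (- e)) = - e" by simp
  then have "n dvd nat (- e)" using assms(2) by (metis int_dvd_int_iff dvd_minus_iff)
  then have "cyclo n dvd (1 - pX ^ nat (- e))" using cyclo_dvd_pow[OF assms(1)] by blast
  then have "cyclo n dvd (pX ^ nat (- e) - 1)" by (metis dvd_minus_iff minus_diff_eq)
  then show ?thesis unfolding one_minus_qv_powi DD_def using False gd_Xpow by auto
qed

lemma gd_one_minus_Xpow:
  assumes "n > 0" "\<not> n dvd m" shows "gd n (1 - pX ^ m)"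
  unfolding gd_def
proof (intro conjI allI impI)
  have "m \<noteq> 0" using assms(2) by (metis dvd_0_right)
  then have "poly (1 - pX ^ m) 0 \<noteq> 0" by (simp add: poly_power power_0_left)
  then show "1 - pX ^ m \<noteq> 0" by (metis poly_0)
  fix w assume "poly (cyclo n) w = 0"
  then obtain k where k: "coprime k n" "w = zroot n k" using cyclo_root by blast
  then show "poly (1 - pX ^ m) w \<noteq> 0" using zroot_pow_ne1[OF assms(1) k(1) assms(2)] by (simp add: poly_power)
qed

lemma gd_uminus: "gd n B \<Longrightarrow> gd n (- B)"
  unfolding gd_def by auto

lemma UU_one_minus:
  assumes "n > 0" "\<not> int n dvd e" shows "UU n (1 - qv powi e)"
proof (cases "0 \<le> e")
  case True
  then have "int (nat e) = e" by simp
  then have "\<not> n dvd nat e" using assms(2) by (metis int_dvd_int_iff)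
  then show ?thesis unfolding one_minus_qv_powi UU_def using True gd_1 gd_one_minus_Xpow[OF assms(1)] by auto
next
  case False
  then have "int (nat (- e)) = - e" by simp
  then have "\<not> n dvd nat (- e)" using assms(2) by (metis int_dvd_int_iff dvd_minus_iff)
  then have "gd n (pX ^ nat (- e) - 1)" using gd_uminus[OF gd_one_minus_Xpow[OF assms(1)]] by fastforce
  then show ?thesis unfolding one_minus_qv_powi UU_def using False gd_Xpow by auto
qed

lemma one_minus_qv_powi_ne0: assumes "e \<noteq> 0" shows "1 - qv powi e \<noteq> 0"
proof (cases "0 < e")
  case True
  then have "poly (1 - pX ^ nat e) 0 \<noteq> 0" by (simp add: poly_power power_0_left)
  then have "1 - pX ^ nat e \<noteq> 0" by (metis poly_0)
  then show ?thesis using True unfolding one_minus_qv_powi by (simp add: Zero_fract_def eq_fract)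
next
  case False
  then have "e < 0" using assms by simp
  then have "poly (pX ^ nat (- e) - 1) 0 \<noteq> 0" by (simp add: poly_power power_0_left)
  then have "pX ^ nat (- e) - 1 \<noteq> 0" by (metis poly_0)
  then show ?thesis using \<open>e < 0\<close> unfolding one_minus_qv_powi by (simp add: Zero_fract_def eq_fract)
qed

lemma qv_ne0: "qv \<noteq> 0"
  unfolding qv_def by (simp add: Zero_fract_def eq_fract)



lemma qpoch_0 [simp]: "qpoch x q 0 = 1"
  unfolding qpoch_def by simp

lemma qpoch_Suc: "qpoch x q (Suc k) = qpoch x q k * (1 - x * q ^ k)"
  unfolding qpoch_def by simp

lemma qpoch_add: "qpoch x q (m + k) = qpoch x q m * qpoch (x * q ^ m) q k"
  by (induction k) (simp_all add: qpoch_Suc power_add mult.assoc)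

lemma qpoch_Suc_left: "qpoch x q (Suc k) = (1 - x) * qpoch (x * q) q k"
  using qpoch_add[of x q 1 k] by (simp add: qpoch_Suc)

lemma qpoch_ne0: fixes x q :: "'a::field" shows "(\<And>j. j < k \<Longrightarrow> 1 - x * q ^ j \<noteq> 0) \<Longrightarrow> qpoch x q k \<noteq> 0"
  unfolding qpoch_def by (simp add: prod_zero_iff)

section \<open>q-Pfaff-Saalschuetz\<close>

definition su :: "'a::field \<Rightarrow> 'a \<Rightarrow> 'a \<Rightarrow> 'a \<Rightarrow> nat \<Rightarrow> nat \<Rightarrow> 'a" where
  "su q x y z M i = qpoch x q i * qpoch y q i * qpoch z q (M - i) * z ^ i /
     (qpoch q q i * qpoch q q (M - i) * qpoch (x * y * z) q i)"

lemma saal_key_mid: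
  fixes x y z q Q1 Q2 :: "'a::field"
  shows "(1 - z * Q2) * ((1 - q * q * Q1 * Q2) * (1 - x*y*z * q * Q1 * Q2))
     - (1 - y * z * q * Q1 * Q2) * (1 - x * z * q * Q1 * Q2) * (1 - q * Q2)
   = - z * Q2 * (1 - x * q * Q1) * (1 - y * q * Q1) * (1 - q * Q2)
     + q * Q2 * (1 - z * Q2) * ((1 - q * Q1) * (1 - x*y*z * Q1))"
  by (simp add: algebra_simps)

lemma saal_key_0:
  fixes x y z q X :: "'a::field"
  shows "(1 - z * X) * (1 - x*y*z * X) - (1 - y * z * X) * (1 - x * z * X)
     = - z * X * (1 - x) * (1 - y)"
  by (simp add: algebra_simps)


lemma gen_L:
  fixes P Zj D1 Qj N den :: "'a::field"
  assumes "D1 \<noteq> 0" "Qj \<noteq> 0" "den \<noteq> 0"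
  shows "P*Zj/(D1*Qj) - (N/den)*(P/D1) = P/(D1*Qj*den) * (Zj*den - N*Qj)"
  using assms by (simp add: field_simps)

lemma gen_R:
  fixes B X1 z Zj D1 Qj E den q Q2 :: "'a::field"
  assumes "D1 \<noteq> 0" "Qj \<noteq> 0" "den \<noteq> 0"
  shows "(- z*Q2*(B*X1*z/D1)*E/den) - (- z*(q*Q2)*(B*Zj/Qj)*X1/den)
     = (B*X1*z)/(D1*Qj*den) * (- z*Q2*E*Qj + q*Q2*Zj*D1)"
  using assms by (simp add: field_simps)

lemma saalschutz:
  fixes q x y z :: "'a::field"
  assumes hq: "\<And>i. 1 - q ^ Suc i \<noteq> 0" and hw: "\<And>i. 1 - x*y*z * q ^ i \<noteq> 0"
  shows "(\<Sum>i\<le>M. su q x y z M i) = qpoch (y*z) q M * qpoch (x*z) q M / (qpoch q q M * qpoch (x*y*z) q M)"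
proof (induction M)
  case 0
  then show ?case by (simp add: su_def)
next
  case (Suc M)
  define w where "w = x*y*z"
  have hq': "1 - q * q ^ i \<noteq> 0" for i using hq[of i] by simp
  have nq: "qpoch q q m \<noteq> 0" for m by (rule qpoch_ne0) (use hq' in auto)
  have nw: "qpoch w q m \<noteq> 0" for m by (rule qpoch_ne0) (use hw in \<open>auto simp: w_def\<close>)
  define X where "X = q ^ M"
  define den where "den = (1 - q * X) * (1 - w * X)"
  have hqX: "1 - q * X \<noteq> 0" unfolding X_def using hq'[of M] by simp
  have hwX: "1 - w * X \<noteq> 0" unfolding X_def using hw[of M] by (simp add: w_def mult.assoc)
  have hden: "den \<noteq> 0" unfolding den_def using hqX hwX by simp
  define c0 where "c0 = (1 - y*z*X) * (1 - x*z*X) / den"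
  have rhs: "qpoch (y*z) q (Suc M) * qpoch (x*z) q (Suc M) / (qpoch q q (Suc M) * qpoch (x*y*z) q (Suc M))
    = c0 * (qpoch (y*z) q M * qpoch (x*z) q M / (qpoch q q M * qpoch (x*y*z) q M))"
    using nq[of M] nw[of M] hden unfolding c0_def den_def X_def w_def
    by (simp add: qpoch_Suc field_simps)
  define g where "g i = (if i = 0 \<or> Suc M < i then 0 else
     - z * q ^ (Suc M - i) * su q x y z M (i - 1) * (1 - x * q ^ (i - 1)) * (1 - y * q ^ (i - 1)) / den)" for i
  have A: "su q x y z (Suc M) i - c0 * su q x y z M i = g (Suc i) - g i" if "i \<le> M" for i
  proof (cases i)
    case 0
    define s0 where "s0 = qpoch z q M / qpoch q q M"
    have e1: "su q x y z (Suc M) 0 = s0 * (1 - z * X) / (1 - q * X)"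
      unfolding su_def s0_def X_def using nq[of M] hq'[of M] by (simp add: qpoch_Suc field_simps)
    have e2: "su q x y z M 0 = s0" unfolding su_def s0_def by simp
    have g1: "g (Suc 0) = - z * X * s0 * (1 - x) * (1 - y) / den"
      using e2 by (simp add: g_def X_def)
    have f1: "s0 * (1 - z * X) / (1 - q * X) = s0 * ((1 - z * X) * (1 - w * X)) / den"
      unfolding den_def using nonzero_mult_divide_mult_cancel_right[OF hwX, of "s0 * (1 - z * X)" "1 - q*X"]
      by (simp only: mult.assoc)
    have f2: "c0 * s0 = s0 * ((1 - y * z * X) * (1 - x * z * X)) / den" unfolding c0_def by simp
    have "s0 * (1 - z * X) / (1 - q * X) - c0 * s0 = s0 / den * ((1 - z * X) * (1 - w * X) - (1 - y * z * X) * (1 - x * z * X))"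
      unfolding f1 f2 using hden by (simp add: field_simps)
    also have "\<dots> = s0 / den * (- z * X * (1 - x) * (1 - y))"
      using saal_key_0[of z X x y] by (simp add: w_def)
    also have "\<dots> = - z * X * s0 * (1 - x) * (1 - y) / den"
      by simp
    moreover have g0: "g 0 = 0" by (simp add: g_def)
    ultimately show ?thesis using 0 e1 e2 g1 by simp
  next
    case (Suc k)
    define j where "j = M - Suc k"
    have Mj: "M = Suc (k + j)" using that Suc unfolding j_def by simp
    define Q1 where "Q1 = q ^ k"
    define Q2 where "Q2 = q ^ j"
    have XQ: "X = q * Q1 * Q2" unfolding X_def Q1_def Q2_def Mj by (simp add: power_add)
    define B where "B = qpoch x q k * qpoch y q k * qpoch z q j * z ^ k / (qpoch q q k * qpoch q q j * qpoch w q k)"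
    define X1 where "X1 = (1 - x*Q1) * (1 - y*Q1)"
    define D1 where "D1 = (1 - q*Q1) * (1 - w*Q1)"
    define Qj where "Qj = 1 - q*Q2"
    define Zj where "Zj = 1 - z*Q2"
    have hD1: "D1 \<noteq> 0" unfolding D1_def Q1_def using hq'[of k] hw[of k] by (simp add: w_def)
    have hQj: "Qj \<noteq> 0" unfolding Qj_def Q2_def using hq'[of j] by simp
    have e1: "su q x y z (Suc M) (Suc k) = B*X1*z*Zj/(D1*Qj)"
      unfolding su_def B_def X1_def D1_def Qj_def Zj_def Q1_def Q2_def Mj w_def
      using nq[of k] nq[of j] nw[of k] hD1 hQj
      by (simp add: qpoch_Suc Suc_diff_le field_simps D1_def Qj_def Q1_def Q2_def w_def)
    have e2: "su q x y z M (Suc k) = B*X1*z/D1"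
      unfolding su_def B_def X1_def D1_def Q1_def Mj w_def
      using nq[of k] nq[of j] nw[of k] hD1
      by (simp add: qpoch_Suc field_simps D1_def Q1_def w_def)
    have e3: "su q x y z M k = B*Zj/Qj"
      unfolding su_def B_def Qj_def Zj_def Q2_def Mj w_def
      using nq[of k] nq[of j] nw[of k] hQj
      by (simp add: qpoch_Suc Suc_diff_le field_simps Qj_def Q2_def w_def)
    have g2: "g (Suc (Suc k)) = - z*Q2*(B*X1*z/D1)*((1 - x*(q*Q1))*(1 - y*(q*Q1)))/den"
      unfolding g_def using that Suc e2 by (simp add: Mj Q1_def Q2_def)
    have g1: "g (Suc k) = - z*(q*Q2)*(B*Zj/Qj)*X1/den"
      unfolding g_def using that Suc e3 by (simp add: Mj Q1_def Q2_def X1_def)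
    have "su q x y z (Suc M) i - c0 * su q x y z M i = B*X1*z*Zj/(D1*Qj) - ((1 - y*z*X) * (1 - x*z*X)/den) * (B*X1*z/D1)"
      using Suc e1 e2 c0_def by simp
    also have "\<dots> = (B*X1*z)/(D1*Qj*den) * (Zj*den - (1 - y*z*X) * (1 - x*z*X)*Qj)"
      by (rule gen_L[OF hD1 hQj hden])
    also have "\<dots> = (B*X1*z)/(D1*Qj*den) * (- z*Q2*((1 - x*(q*Q1))*(1 - y*(q*Q1)))*Qj + q*Q2*Zj*D1)"
    proof -
      have "Zj*den - (1 - y*z*X) * (1 - x*z*X)*Qj = - z*Q2*((1 - x*(q*Q1))*(1 - y*(q*Q1)))*Qj + q*Q2*Zj*D1"
        unfolding Zj_def den_def Qj_def D1_def XQ w_def using saal_key_mid[of z Q2 q Q1 x y]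
        by (simp add: algebra_simps)
      then show ?thesis by simp
    qed
    also have "\<dots> = (- z*Q2*(B*X1*z/D1)*((1 - x*(q*Q1))*(1 - y*(q*Q1)))/den) - (- z*(q*Q2)*(B*Zj/Qj)*X1/den)"
      by (rule gen_R[OF hD1 hQj hden, symmetric])
    finally show ?thesis using g1 g2 Suc by simp
  qed
  have Bc: "su q x y z (Suc M) (Suc M) = - g (Suc M)"
  proof -
    have "su q x y z (Suc M) (Suc M) = su q x y z M M * (1 - x*X) * (1 - y*X) * z / ((1 - q*X) * (1 - w*X))"
      unfolding su_def X_def w_def using nq[of M] nw[of M] hden
      by (simp add: qpoch_Suc field_simps den_def X_def w_def)
    then show ?thesis unfolding g_def den_def X_def by simp
  qed
  have "(\<Sum>i\<le>Suc M. su q x y z (Suc M) i) = (\<Sum>i\<le>M. su q x y z (Suc M) i) + su q x y z (Suc M) (Suc M)"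
    by simp
  also have "(\<Sum>i\<le>M. su q x y z (Suc M) i) = (\<Sum>i\<le>M. c0 * su q x y z M i + (g (Suc i) - g i))"
    using A by (intro sum.cong) (auto simp: algebra_simps)
  also have "\<dots> = c0 * (\<Sum>i\<le>M. su q x y z M i) + (g (Suc M) - g 0)"
    by (simp add: sum.distrib sum_distrib_left atMost_atLeast0 sum_Suc_diff)
  finally have "(\<Sum>i\<le>Suc M. su q x y z (Suc M) i) = c0 * (\<Sum>i\<le>M. su q x y z M i)"
    using Bc by (simp add: g_def)
  then show ?case using Suc.IH rhs by simp
qed


section \<open>Bailey lemma\<close>

lemma sum_swap_tri:
  fixes f :: "nat \<Rightarrow> nat \<Rightarrow> 'a::comm_monoid_add"
  shows "(\<Sum>j\<le>n. \<Sum>k\<le>j. f j k) = (\<Sum>k\<le>n. \<Sum>j\<in>{k..n}. f j k)"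
proof (induction n)
  case 0 then show ?case by simp
next
  case (Suc n)
  have "(\<Sum>k\<le>Suc n. \<Sum>j\<in>{k..Suc n}. f j k) = (\<Sum>k\<le>n. \<Sum>j\<in>{k..Suc n}. f j k) + f (Suc n) (Suc n)"
    by simp
  also have "(\<Sum>k\<le>n. \<Sum>j\<in>{k..Suc n}. f j k) = (\<Sum>k\<le>n. (\<Sum>j\<in>{k..n}. f j k) + f (Suc n) k)"
  proof (intro sum.cong refl)
    fix k assume "k \<in> {..n}"
    then have "{k..Suc n} = insert (Suc n) {k..n}" by auto
    then show "(\<Sum>j\<in>{k..Suc n}. f j k) = (\<Sum>j\<in>{k..n}. f j k) + f (Suc n) k"
      by (simp add: add.commute)
  qed
  finally show ?case using Suc.IH by (simp add: sum.distrib add.assoc)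
qed

lemma bailey_inner:
  fixes q a r1 r2 l :: "'a::field"
  assumes haq: "a * q = r1 * r2 * l"
    and hq: "\<And>i. 1 - q ^ Suc i \<noteq> 0" and ha: "\<And>i. 1 - a * q * q ^ i \<noteq> 0"
    and h1: "\<And>i. 1 - r2 * l * q ^ i \<noteq> 0" and h2: "\<And>i. 1 - r1 * l * q ^ i \<noteq> 0"
    and rn: "r \<le> n"
  shows "(\<Sum>j\<in>{r..n}. qpoch r1 q j * qpoch r2 q j * qpoch l q (n - j) * l ^ j /
            (qpoch q q (n - j) * qpoch q q (j - r) * qpoch (a * q) q (j + r)))
       = qpoch r1 q r * qpoch r2 q r * l ^ r * qpoch (r2 * l) q n * qpoch (r1 * l) q n /
            (qpoch (r2 * l) q r * qpoch (r1 * l) q r * qpoch q q (n - r) * qpoch (a * q) q (n + r))"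
proof -
  define M where "M = n - r"
  have nM: "n = r + M" using rn unfolding M_def by simp
  define x where "x = r1 * q ^ r"
  define y where "y = r2 * q ^ r"
  have xyz: "x * y * l = a * q * q ^ (r + r)" unfolding x_def y_def using haq
    by (simp add: power_add algebra_simps)
  have hq': "1 - q * q ^ i \<noteq> 0" for i using hq[of i] by simp
  have nq: "qpoch q q m \<noteq> 0" for m by (rule qpoch_ne0) (use hq' in auto)
  have na: "qpoch (a * q) q m \<noteq> 0" for m by (rule qpoch_ne0) (use ha in auto)
  have n1: "qpoch (r2 * l) q m \<noteq> 0" for m by (rule qpoch_ne0) (use h1 in auto)
  have n2: "qpoch (r1 * l) q m \<noteq> 0" for m by (rule qpoch_ne0) (use h2 in auto)
  have nw: "qpoch (a * q * q ^ (r + r)) q m \<noteq> 0" for m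
    by (rule qpoch_ne0) (use ha in \<open>auto simp: power_add mult.assoc simp flip: power_add\<close>)
  define C where "C = qpoch r1 q r * qpoch r2 q r * l ^ r / qpoch (a * q) q (r + r)"
  have "(\<Sum>j\<in>{r..n}. qpoch r1 q j * qpoch r2 q j * qpoch l q (n - j) * l ^ j /
            (qpoch q q (n - j) * qpoch q q (j - r) * qpoch (a * q) q (j + r)))
      = (\<Sum>i\<in>{0..M}. qpoch r1 q (i + r) * qpoch r2 q (i + r) * qpoch l q (n - (i + r)) * l ^ (i + r) /
            (qpoch q q (n - (i + r)) * qpoch q q (i + r - r) * qpoch (a * q) q (i + r + r)))"
  proof -
    have e: "{r..n} = {0 + r..M + r}" using nM by (simp add: add.commute)
    show ?thesis unfolding e sum.shift_bounds_cl_nat_ivl by simp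
  qed
  also have "\<dots> = (\<Sum>i\<le>M. C * su q x y l M i)"
  proof (intro sum.cong)
    show "{0..M} = {..M}" by auto
    fix i assume "i \<in> {..M}"
    then have iM: "i \<le> M" by simp
    have s1: "qpoch r1 q (i + r) = qpoch r1 q r * qpoch x q i" unfolding x_def using qpoch_add[of r1 q r i] by (simp add: add.commute)
    have s2: "qpoch r2 q (i + r) = qpoch r2 q r * qpoch y q i" unfolding y_def using qpoch_add[of r2 q r i] by (simp add: add.commute)
    have s3: "qpoch (a * q) q (i + r + r) = qpoch (a * q) q (r + r) * qpoch (x * y * l) q i"
    proof -
      have "i + r + r = r + r + i" by simp
      then show ?thesis unfolding xyz by (simp only: qpoch_add)
    qed
    have s4: "n - (i + r) = M - i" unfolding nM by simp
    show "qpoch r1 q (i + r) * qpoch r2 q (i + r) * qpoch l q (n - (i + r)) * l ^ (i + r) /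
            (qpoch q q (n - (i + r)) * qpoch q q (i + r - r) * qpoch (a * q) q (i + r + r)) = C * su q x y l M i"
      unfolding s1 s2 s3 s4 C_def su_def using nq[of i] nq[of "M - i"] na[of "r + r"] nw[of i] xyz
      by (simp add: power_add field_simps)
  qed
  also have "\<dots> = C * (\<Sum>i\<le>M. su q x y l M i)" by (simp add: sum_distrib_left)
  also have "(\<Sum>i\<le>M. su q x y l M i) = qpoch (y * l) q M * qpoch (x * l) q M / (qpoch q q M * qpoch (x * y * l) q M)"
    by (rule saalschutz) (use hq ha xyz in \<open>auto simp: mult.assoc simp flip: power_add\<close>)
  also have "C * (qpoch (y * l) q M * qpoch (x * l) q M / (qpoch q q M * qpoch (x * y * l) q M))
    = qpoch r1 q r * qpoch r2 q r * l ^ r * qpoch (r2 * l) q n * qpoch (r1 * l) q n /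
            (qpoch (r2 * l) q r * qpoch (r1 * l) q r * qpoch q q (n - r) * qpoch (a * q) q (n + r))"
  proof -
    have t1: "qpoch (r2 * l) q n = qpoch (r2 * l) q r * qpoch (y * l) q M"
      unfolding nM y_def qpoch_add by (simp add: algebra_simps)
    have t2: "qpoch (r1 * l) q n = qpoch (r1 * l) q r * qpoch (x * l) q M"
      unfolding nM x_def qpoch_add by (simp add: algebra_simps)
    have t3: "qpoch (a * q) q (n + r) = qpoch (a * q) q (r + r) * qpoch (x * y * l) q M"
      unfolding nM xyz using qpoch_add[of "a*q" q "r + r" M] by (simp add: algebra_simps)
    have t4: "n - r = M" unfolding nM by simp
    show ?thesis unfolding t1 t2 t3 t4 C_def using n1[of r] n2[of r] nq[of M] na[of "r+r"] nw[of M] xyz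
      by (simp add: field_simps)
  qed
  finally show ?thesis .
qed


lemma bailey_lemma:
  fixes q a r1 r2 l :: "'a::field" and \<alpha> \<beta> :: "nat \<Rightarrow> 'a"
  assumes haq: "a * q = r1 * r2 * l"
    and hq: "\<And>i. 1 - q ^ Suc i \<noteq> 0" and ha: "\<And>i. 1 - a * q * q ^ i \<noteq> 0"
    and h1: "\<And>i. 1 - r2 * l * q ^ i \<noteq> 0" and h2: "\<And>i. 1 - r1 * l * q ^ i \<noteq> 0"
    and pair: "\<And>m. \<beta> m = (\<Sum>k\<le>m. \<alpha> k / (qpoch q q (m - k) * qpoch (a * q) q (m + k)))"
  shows "(\<Sum>j\<le>n. qpoch r1 q j * qpoch r2 q j * qpoch l q (n - j) * l ^ j /
             (qpoch q q (n - j) * qpoch (r2 * l) q n * qpoch (r1 * l) q n) * \<beta> j)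
       = (\<Sum>k\<le>n. (qpoch r1 q k * qpoch r2 q k * l ^ k / (qpoch (r2 * l) q k * qpoch (r1 * l) q k) * \<alpha> k)
             / (qpoch q q (n - k) * qpoch (a * q) q (n + k)))"
proof -
  define K where "K = qpoch (r2 * l) q n * qpoch (r1 * l) q n"
  have n1: "qpoch (r2 * l) q m \<noteq> 0" for m by (rule qpoch_ne0) (use h1 in auto)
  have n2: "qpoch (r1 * l) q m \<noteq> 0" for m by (rule qpoch_ne0) (use h2 in auto)
  have hK: "K \<noteq> 0" unfolding K_def using n1 n2 by simp
  define N where "N j = qpoch r1 q j * qpoch r2 q j * qpoch l q (n - j) * l ^ j" for j
  have "(\<Sum>j\<le>n. qpoch r1 q j * qpoch r2 q j * qpoch l q (n - j) * l ^ j /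
             (qpoch q q (n - j) * qpoch (r2 * l) q n * qpoch (r1 * l) q n) * \<beta> j)
      = (\<Sum>j\<le>n. \<Sum>k\<le>j. N j / (qpoch q q (n - j) * K) * (\<alpha> k / (qpoch q q (j - k) * qpoch (a * q) q (j + k))))"
    unfolding pair N_def K_def by (simp add: sum_distrib_left mult.assoc)
  also have "\<dots> = (\<Sum>k\<le>n. \<Sum>j\<in>{k..n}. N j / (qpoch q q (n - j) * K) * (\<alpha> k / (qpoch q q (j - k) * qpoch (a * q) q (j + k))))"
    by (rule sum_swap_tri)
  also have "\<dots> = (\<Sum>k\<le>n. \<alpha> k / K * (\<Sum>j\<in>{k..n}. N j / (qpoch q q (n - j) * qpoch q q (j - k) * qpoch (a * q) q (j + k))))"
    by (intro sum.cong refl) (simp add: sum_distrib_left mult.assoc mult.commute mult.left_commute)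
  also have "\<dots> = (\<Sum>k\<le>n. (qpoch r1 q k * qpoch r2 q k * l ^ k / (qpoch (r2 * l) q k * qpoch (r1 * l) q k) * \<alpha> k)
             / (qpoch q q (n - k) * qpoch (a * q) q (n + k)))"
  proof (intro sum.cong refl)
    fix k assume "k \<in> {..n}"
    then have kn: "k \<le> n" by simp
    have "(\<Sum>j\<in>{k..n}. N j / (qpoch q q (n - j) * qpoch q q (j - k) * qpoch (a * q) q (j + k)))
       = qpoch r1 q k * qpoch r2 q k * l ^ k * K /
            (qpoch (r2 * l) q k * qpoch (r1 * l) q k * qpoch q q (n - k) * qpoch (a * q) q (n + k))"
      unfolding N_def K_def using bailey_inner[OF haq hq ha h1 h2 kn] by (simp only: mult.assoc)
    then show "\<alpha> k / K * (\<Sum>j\<in>{k..n}. N j / (qpoch q q (n - j) * qpoch q q (j - k) * qpoch (a * q) q (j + k)))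
       = (qpoch r1 q k * qpoch r2 q k * l ^ k / (qpoch (r2 * l) q k * qpoch (r1 * l) q k) * \<alpha> k)
             / (qpoch q q (n - k) * qpoch (a * q) q (n + k))"
      using hK by (simp add: field_simps)
  qed
  finally show ?thesis .
qed


section \<open>Unit Bailey pair\<close>

definition tri :: "nat \<Rightarrow> nat" where "tri k = k * (k + 1) div 2"

lemma tri_Suc: "tri (Suc k) = tri k + Suc k"
  unfolding tri_def by (induction k) auto

lemma tri_alt: "Suc k * (Suc k - 1) div 2 = tri k"
  unfolding tri_def by (simp add: mult.commute)

definition alpha0 :: "'a::field \<Rightarrow> 'a \<Rightarrow> nat \<Rightarrow> 'a" where
  "alpha0 a q r = (1 - a * q ^ (2 * r)) * qpoch a q r / ((1 - a) * qpoch q q r) * (-1) ^ r * q ^ (r * (r - 1) div 2)"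

lemma unit_alg:
  fixes G Qk Qs Ank Q A1 A2 A3 A4 A5 A6 :: "'a::field"
  assumes "Qk \<noteq> 0" "Qs \<noteq> 0" "Ank \<noteq> 0" "A1 \<noteq> 0" "A2 \<noteq> 0" "A3 \<noteq> 0" "A4 \<noteq> 0"
    and rel: "A1*A3 - A6*A4 = - Q*A5*A2"
  shows "G/(Qk*(Qs*A2)*Ank*A4) + (- A6*G/(Qk*A1)) / (Qs*A2*(Ank*A3))
     = (- G*Q*A5)/((Qk*A1)*Qs*(Ank*A3)*A4)"
proof -
  have L: "G/(Qk*(Qs*A2)*Ank*A4) + (- A6*G/(Qk*A1)) / (Qs*A2*(Ank*A3)) = G*(A1*A3 - A6*A4)/(Qk*Qs*Ank*A1*A2*A3*A4)"
    using assms by (simp add: field_simps)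
  have R: "(- G*Q*A5)/((Qk*A1)*Qs*(Ank*A3)*A4) = G*(- Q*A5*A2)/(Qk*Qs*Ank*A1*A2*A3*A4)"
    using assms by (simp add: field_simps)
  show ?thesis unfolding L R rel ..
qed


lemma alpha0_Suc_alg:
  fixes A u X Qk B e c :: "'a::field"
  assumes "u \<noteq> 0"
  shows "A * (u * X) / (u * (Qk * B)) * (- e) * c = (- A * (e * c * X)) / (Qk * B)"
  using assms by (simp add: field_simps)

lemma alpha0_Suc:
  fixes a q :: "'a::field"
  assumes h0: "1 - a \<noteq> 0"
  shows "alpha0 a q (Suc k) = (- (1 - a * ((q * q ^ k) * (q * q ^ k))) * ((-1) ^ k * q ^ tri k * qpoch (a * q) q k))
          / (qpoch q q k * (1 - q * q ^ k))"
proof -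
  have p: "q ^ (2 * Suc k) = (q * q ^ k) * (q * q ^ k)" by (simp only: mult_2 power_add power_Suc)
  have m: "(-1::'a) ^ Suc k = - ((-1) ^ k)" by simp
  show ?thesis unfolding alpha0_def tri_alt p qpoch_Suc_left[of a] qpoch_Suc[of q q k] m
    by (rule alpha0_Suc_alg[OF h0])
qed

lemma cancel_alg:
  fixes A G Qk u An :: "'a::field"
  assumes "A \<noteq> 0"
  shows "(- A * G / (Qk * u)) / (An * A) = - G / (Qk * An * u)"
  using assms by (simp add: field_simps)

lemma unit_pair:
  fixes a q :: "'a::field"
  assumes hq: "\<And>i. 1 - q ^ Suc i \<noteq> 0" and ha: "\<And>i. 1 - a * q * q ^ i \<noteq> 0" and h0: "1 - a \<noteq> 0"
  shows "(\<Sum>r\<le>n. alpha0 a q r / (qpoch q q (n - r) * qpoch (a * q) q (n + r))) = (if n = 0 then 1 else 0)"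
proof (cases n)
  case 0
  then show ?thesis using h0 by (simp add: alpha0_def)
next
  case (Suc n')
  have hq': "1 - q * q ^ i \<noteq> 0" for i using hq[of i] by simp
  have nq: "qpoch q q m \<noteq> 0" for m by (rule qpoch_ne0) (use hq' in auto)
  have na: "qpoch (a * q) q m \<noteq> 0" for m by (rule qpoch_ne0) (use ha in auto)
  define t where "t r = alpha0 a q r / (qpoch q q (n - r) * qpoch (a * q) q (n + r))" for r
  define P where "P k = (-1) ^ k * q ^ tri k * qpoch (a * q) q k /
      (qpoch q q k * qpoch q q (n - Suc k) * qpoch (a * q) q (n + k) * (1 - q ^ n))" for k
  have hn: "1 - q ^ n \<noteq> 0" using hq[of n'] Suc by simp
  have claim: "(\<Sum>r\<le>k. t r) = P k" if "k \<le> n'" for k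
    using that
  proof (induction k)
    case 0
    have qn: "qpoch q q n = qpoch q q n' * (1 - q ^ n)" using Suc by (simp add: qpoch_Suc)
    have t0: "t 0 = 1 / (qpoch q q n * qpoch (a * q) q n)" using h0 by (simp add: t_def alpha0_def)
    have P0: "P 0 = 1 / (qpoch q q n' * qpoch (a * q) q n * (1 - q ^ n))"
      using \<open>n = Suc n'\<close> by (simp add: P_def tri_def)
    show ?case using t0 P0 unfolding qn by (simp add: ac_simps)
  next
    case (Suc k)
    then have kn: "Suc k \<le> n'" by simp
    define s where "s = n' - Suc k"
    have ns: "n = Suc (Suc (k + s))" unfolding s_def using kn \<open>n = Suc n'\<close> by simp
    define G where "G = (-1) ^ k * q ^ tri k * qpoch (a * q) q k"
    define Qk where "Qk = qpoch q q k"
    define Qs where "Qs = qpoch q q s"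
    define Ank where "Ank = qpoch (a * q) q (n + k)"
    define Q where "Q = q * q ^ k"
    define S where "S = q * q ^ s"
    have qn: "q ^ n = Q * S" unfolding ns Q_def S_def by (simp add: power_add)
    have qnk: "a * q * q ^ (n + k) = a * Q * Q * S" unfolding ns Q_def S_def by (simp add: power_add algebra_simps)
    have qnk2: "q ^ (n + k) = Q * (Q * q ^ s)" unfolding ns Q_def by (simp add: power_add mult_ac)
    have A1: "1 - Q \<noteq> 0" unfolding Q_def by (rule hq')
    have A2: "1 - S \<noteq> 0" unfolding S_def by (rule hq')
    have A3: "1 - a * Q * Q * S \<noteq> 0" unfolding qnk[symmetric] by (rule ha)
    have A4: "1 - Q * S \<noteq> 0" using hn unfolding qn .
    have e1: "P k = G / (Qk * (Qs * (1 - S)) * Ank * (1 - Q * S))"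
    proof -
      have "n - Suc k = Suc s" unfolding ns by simp
      then show ?thesis unfolding P_def G_def Qk_def Qs_def Ank_def qn S_def by (simp add: qpoch_Suc)
    qed
    have e2: "t (Suc k) = (- (1 - a * (Q * Q)) * G / (Qk * (1 - Q))) / (Qs * (1 - S) * (Ank * (1 - a * Q * Q * S)))"
    proof -
      have "n - Suc k = Suc s" unfolding ns by simp
      moreover have "n + Suc k = Suc (n + k)" by simp
      ultimately show ?thesis unfolding t_def alpha0_Suc[OF h0]
        unfolding G_def Qk_def Qs_def Ank_def Q_def[symmetric] S_def
        by (simp add: qpoch_Suc qnk2 mult.assoc)
    qed
    have e3: "P (Suc k) = (- G * Q * (1 - a * Q)) / ((Qk * (1 - Q)) * Qs * (Ank * (1 - a * Q * Q * S)) * (1 - Q * S))"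
    proof -
      have "n - Suc (Suc k) = s" unfolding ns by simp
      moreover have "n + Suc k = Suc (n + k)" by simp
      moreover have qn': "q ^ n = q * (q ^ k * S)" using qn unfolding Q_def by (simp add: mult.assoc)
      ultimately show ?thesis unfolding P_def G_def Qk_def Qs_def Ank_def tri_Suc
        by (simp add: qpoch_Suc qnk qn' Q_def power_add mult.assoc mult.left_commute)
    qed
    have rel: "(1 - Q) * (1 - a * Q * Q * S) - (1 - a * (Q * Q)) * (1 - Q * S) = - Q * (1 - a * Q) * (1 - S)"
      by (simp add: algebra_simps)
    have "(\<Sum>r\<le>Suc k. t r) = P k + t (Suc k)" using Suc kn by simp
    also have "\<dots> = P (Suc k)" unfolding e1 e2 e3
      by (rule unit_alg[OF _ _ _ A1 A2 A3 A4 rel]) (use nq na in \<open>auto simp: Qk_def Qs_def Ank_def\<close>)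
    finally show ?case .
  qed
  have "(\<Sum>r\<le>n. t r) = P n' + t n" using claim[of n'] Suc by simp
  also have "\<dots> = 0"
  proof -
    define G where "G = (-1) ^ n' * q ^ tri n' * qpoch (a * q) q n'"
    define Q where "Q = q * q ^ n'"
    have Qn: "q ^ n = Q" unfolding Q_def Suc by simp
    have B: "a * q * q ^ (n + n') = a * (Q * Q)" unfolding Q_def Suc by (simp add: power_add algebra_simps)
    have hB: "1 - a * (Q * Q) \<noteq> 0" using ha[of "n + n'"] unfolding B .
    have hQ: "1 - Q \<noteq> 0" unfolding Q_def by (rule hq')
    have An: "qpoch (a * q) q (n + n) = qpoch (a * q) q (n + n') * (1 - a * (Q * Q))"
    proof -
      have "n + n = Suc (n + n')" using Suc by simp
      then show ?thesis using B by (simp add: qpoch_Suc)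
    qed
    have "P n' = G / (qpoch q q n' * qpoch (a * q) q (n + n') * (1 - Q))"
      unfolding P_def G_def Qn using Suc by simp
    moreover have "t n = - G / (qpoch q q n' * qpoch (a * q) q (n + n') * (1 - Q))"
    proof -
      have "t n = (- (1 - a * (Q * Q)) * G / (qpoch q q n' * (1 - Q))) / (qpoch (a * q) q (n + n') * (1 - a * (Q * Q)))"
        unfolding t_def Suc alpha0_Suc[OF h0] G_def Q_def[symmetric]
        using An by (simp add: Suc[symmetric] mult.assoc)
      also have "\<dots> = - G / (qpoch q q n' * qpoch (a * q) q (n + n') * (1 - Q))"
        by (rule cancel_alg[OF hB])
      finally show ?thesis .
    qed
    ultimately show ?thesis by simp
  qed
  finally show ?thesis unfolding t_def using Suc by simp
qed


section \<open>Iterated Bailey chain\<close>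

fun alph :: "(nat \<Rightarrow> 'a) \<Rightarrow> (nat \<Rightarrow> 'a) \<Rightarrow> (nat \<Rightarrow> 'a) \<Rightarrow> 'a \<Rightarrow> 'a \<Rightarrow> nat \<Rightarrow> nat \<Rightarrow> 'a::field" where
  "alph R1 R2 L a q 0 k = alpha0 a q k"
| "alph R1 R2 L a q (Suc i) k = qpoch (R1 i) q k * qpoch (R2 i) q k * L i ^ k /
     (qpoch (R2 i * L i) q k * qpoch (R1 i * L i) q k) * alph R1 R2 L a q i k"

fun bet :: "(nat \<Rightarrow> 'a) \<Rightarrow> (nat \<Rightarrow> 'a) \<Rightarrow> (nat \<Rightarrow> 'a) \<Rightarrow> 'a \<Rightarrow> 'a \<Rightarrow> nat \<Rightarrow> nat \<Rightarrow> 'a::field" where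
  "bet R1 R2 L a q 0 n = (if n = 0 then 1 else 0)"
| "bet R1 R2 L a q (Suc i) n = (\<Sum>j\<le>n. qpoch (R1 i) q j * qpoch (R2 i) q j * qpoch (L i) q (n - j) * L i ^ j /
     (qpoch q q (n - j) * qpoch (R2 i * L i) q n * qpoch (R1 i * L i) q n) * bet R1 R2 L a q i j)"

lemma bailey_iter:
  fixes a q :: "'a::field"
  assumes hq: "\<And>i. 1 - q ^ Suc i \<noteq> 0" and ha: "\<And>i. 1 - a * q * q ^ i \<noteq> 0" and h0: "1 - a \<noteq> 0"
    and haq: "\<And>i. a * q = R1 i * R2 i * L i"
    and h1: "\<And>i m. 1 - R2 i * L i * q ^ m \<noteq> 0" and h2: "\<And>i m. 1 - R1 i * L i * q ^ m \<noteq> 0"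
  shows "bet R1 R2 L a q i n = (\<Sum>k\<le>n. alph R1 R2 L a q i k / (qpoch q q (n - k) * qpoch (a * q) q (n + k)))"
proof (induction i arbitrary: n)
  case 0
  show ?case using unit_pair[OF hq ha h0, of n] by simp
next
  case (Suc i)
  show ?case
    unfolding bet.simps alph.simps
    by (rule bailey_lemma[OF haq hq ha h1 h2 Suc.IH])
qed



declare power_int_of_nat [simp del]

abbreviation qq :: "int \<Rightarrow> ratfun" where "qq e \<equiv> qv powi e"

lemma qq_add: "qq a * qq b = qq (a + b)"
  by (simp add: power_int_add qv_ne0)

lemma qq_pow: "qq a ^ k = qq (a * int k)"
  by (simp add: power_int_mult power_int_of_nat)

lemma qq_0: "qq 0 = 1" by simp

lemma qq_ne0: "qq a \<noteq> 0" by (simp add: qv_ne0)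

lemma qpoch_qq: "qpoch (qq u) (qq v) k = (\<Prod>j<k. (1 - qq (u + v * int j)))"
  unfolding qpoch_def by (simp add: qq_pow qq_add)

lemma one_minus_qq_ne0: "e \<noteq> 0 \<Longrightarrow> 1 - qq e \<noteq> 0"
  by (rule one_minus_qv_powi_ne0)

lemma DD0_qpoch: "DD n 0 (qpoch (qq u) (qq v) k)"
  unfolding qpoch_qq by (rule DD_prod0) (rule DD0_one_minus)

lemma UU_qpoch: assumes "n > 0" "\<And>j. j < k \<Longrightarrow> \<not> int n dvd u + v * int j"
  shows "UU n (qpoch (qq u) (qq v) k)"
  unfolding qpoch_qq by (rule UU_prod) (use assms UU_one_minus in auto)

lemma DD1_qpoch: assumes "n > 0" "j0 < k" "int n dvd u + v * int j0"
  shows "DD n 1 (qpoch (qq u) (qq v) k)"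
  unfolding qpoch_qq
  by (rule DD_prod1[of _ j0]) (use assms DD1_one_minus DD0_one_minus in auto)

lemma DD_prod_diff:
  fixes k :: nat and f g :: "nat \<Rightarrow> ratfun"
  assumes "\<And>j. j < k \<Longrightarrow> DD n 0 (f j)" "\<And>j. j < k \<Longrightarrow> DD n 0 (g j)" "\<And>j. j < k \<Longrightarrow> DD n e (f j - g j)"
  shows "DD n e ((\<Prod>j<k. f j) - (\<Prod>j<k. g j))"
  using assms
proof (induction k)
  case 0 then show ?case by (simp add: DD_zero)
next
  case (Suc k)
  have eq: "(\<Prod>j<Suc k. f j) - (\<Prod>j<Suc k. g j) = ((\<Prod>j<k. f j) - (\<Prod>j<k. g j)) * f k + (\<Prod>j<k. g j) * (f k - g k)"
    by (simp add: algebra_simps)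
  have 1: "DD n e ((\<Prod>j<k. f j) - (\<Prod>j<k. g j))" using Suc by simp
  have 2: "DD n 0 (f k)" using Suc by simp
  have 3: "DD n 0 (\<Prod>j<k. g j)" using Suc by (intro DD_prod0) simp
  have 4: "DD n e (f k - g k)" using Suc by simp
  have 5: "DD n e (((\<Prod>j<k. f j) - (\<Prod>j<k. g j)) * f k)" using DD_mult[OF 1 2] by simp
  have 6: "DD n e ((\<Prod>j<k. g j) * (f k - g k))" using DD_mult[OF 3 4] by simp
  show ?case unfolding eq by (rule DD_add[OF 5 6])
qed

lemma pair_factor:
  assumes "n > 0" "int n dvd c"
  shows "DD n 2 ((1 - qq x) ^ 2 - (1 - qq (x + c)) * (1 - qq (x - c)))"
proof -
  have eq: "(1 - qq x) ^ 2 - (1 - qq (x + c)) * (1 - qq (x - c)) = qq x * (- (1 - qq c)) * (1 - qq (- c))"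
  proof -
    have a: "qq (x + c) = qq x * qq c" by (simp add: qq_add)
    have b: "qq (x - c) = qq x * qq (- c)" by (simp add: qq_add)
    have e: "qq c * qq (- c) = 1" by (simp add: qq_add)
    have g: "\<And>X a b :: ratfun. a * b = 1 \<Longrightarrow> (1 - X) ^ 2 - (1 - X * a) * (1 - X * b) = X * (- (1 - a)) * (1 - b)"
    proof -
      fix X a b :: ratfun assume ab: "a * b = 1"
      have "(1 - X) ^ 2 - (1 - X * a) * (1 - X * b) - X * (- (1 - a)) * (1 - b) = (X * X - X) * (1 - a * b)"
        by (simp add: algebra_simps power2_eq_square)
      then show "(1 - X) ^ 2 - (1 - X * a) * (1 - X * b) = X * (- (1 - a)) * (1 - b)" using ab by simp
    qed
    show ?thesis unfolding a b by (rule g[OF e])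
  qed
  have "DD n (0 + 1 + 1) (qq x * (- (1 - qq c)) * (1 - qq (- c)))"
    by (intro DD_mult UU_DD UU_qv_powi DD_uminus DD1_one_minus assms) (use assms in auto)
  then show ?thesis unfolding eq by (simp add: numeral_2_eq_2)
qed

lemma pair_qpoch:
  assumes "n > 0" "int n dvd c"
  shows "DD n 2 ((qpoch (qq u) (qq v) k) ^ 2 - qpoch (qq (u + c)) (qq v) k * qpoch (qq (u - c)) (qq v) k)"
proof -
  have "(qpoch (qq u) (qq v) k) ^ 2 = (\<Prod>j<k. (1 - qq (u + v * int j)) ^ 2)"
    unfolding qpoch_qq by (simp add: prod_power_distrib)
  moreover have "qpoch (qq (u + c)) (qq v) k * qpoch (qq (u - c)) (qq v) k
      = (\<Prod>j<k. (1 - qq (u + v * int j + c)) * (1 - qq (u + v * int j - c)))"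
    unfolding qpoch_qq prod.distrib by (simp add: algebra_simps)
  moreover have "DD n 2 ((\<Prod>j<k. (1 - qq (u + v * int j)) ^ 2) - (\<Prod>j<k. (1 - qq (u + v * int j + c)) * (1 - qq (u + v * int j - c))))"
  proof (rule DD_prod_diff)
    fix j
    show "DD n 0 ((1 - qq (u + v * int j)) ^ 2)" using DD_power[OF DD0_one_minus[of n "u + v * int j"], of 2] by simp
    show "DD n 0 ((1 - qq (u + v * int j + c)) * (1 - qq (u + v * int j - c)))"
      using DD_mult[OF DD0_one_minus DD0_one_minus] by simp
    show "DD n 2 ((1 - qq (u + v * int j)) ^ 2 - (1 - qq (u + v * int j + c)) * (1 - qq (u + v * int j - c)))"
      by (rule pair_factor[OF assms])
  qed
  ultimately show ?thesis by simp
qed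

lemma W_alg:
  fixes qr q2 u X a1 p1 pN pNk aN aNk rc rm dc cd sg tp eN l0 l1 E :: "'a::field"
  assumes nz: "u \<noteq> 0" "p1 \<noteq> 0" "pNk \<noteq> 0" "aN \<noteq> 0" "cd \<noteq> 0" "dc \<noteq> 0" "sg \<noteq> 0" "tp \<noteq> 0" "X \<noteq> 0"
     "l0 \<noteq> 0" "l1 \<noteq> 0"
    and K1: "sg * tp * pN = pNk * eN * rm" and K2: "aNk = aN * cd" and K3: "qr * X / u = q2"
    and ex: "eN * l0 * l1 ^ i = E"
  shows "qr * (pN * aN) * ((X * a1 / (u * p1) * sg * tp) * (rc * a1 * l0 / (dc * p1)) * (a1 * a1 * l1 / (p1 * p1)) ^ i / (pNk * aNk))
     = q2 * (a1 ^ (2 + 2 * i) * rc * rm / (p1 ^ (2 + 2 * i) * dc * cd)) * E"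
proof -
  have pN: "pN = pNk * eN * rm / (sg * tp)" using K1 nz by (simp add: field_simps)
  have qr: "qr = q2 * u / X" using K3 nz by (simp add: field_simps)
  have eN: "eN = E / (l0 * l1 ^ i)" using ex nz by (simp add: field_simps)
  have G: "(a1 * a1 * l1 / (p1 * p1)) ^ i = a1 ^ (2 * i) * l1 ^ i / p1 ^ (2 * i)"
    by (simp add: power_divide power_mult_distrib power_mult power2_eq_square)
  have a2: "a1 ^ (2 + 2 * i) = a1 * a1 * a1 ^ (2 * i)" by (simp add: power_add power2_eq_square)
  have p2: "p1 ^ (2 + 2 * i) = p1 * p1 * p1 ^ (2 * i)" by (simp add: power_add power2_eq_square)
  show ?thesis unfolding pN qr eN K2 G a2 p2 using nz by (simp add: field_simps)
qed

lemma Sdiff_alg: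
  fixes q2 E a1 p1 rc rm dc cd :: "'a::field"
  assumes "p1 \<noteq> 0" "dc \<noteq> 0" "cd \<noteq> 0"
  shows "q2 * a1 ^ (m + 2) / p1 ^ (m + 2) * E - q2 * (a1 ^ m * rc * rm / (p1 ^ m * dc * cd)) * E
    = q2 * E * (a1 ^ m * inverse (p1 ^ m)) * ((a1 ^ 2 - rc * rm) * inverse (p1 ^ 2) + rc * rm * (inverse (p1 ^ 2) - inverse (dc * cd)))"
  using assms by (simp add: field_simps power_add power2_eq_square)

lemma DD0_qint: assumes "n > 1" shows "DD n 0 (qint x)"
proof -
  have "qint x = (1 - qq x) * inverse (1 - qq 1)" unfolding qint_def by (simp add: divide_inverse)
  moreover have "UU n (1 - qq 1)" using assms by (intro UU_one_minus) (auto simp: zdvd1_eq)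
  ultimately show ?thesis using DD_mult[OF DD0_one_minus UU_DD[OF UU_inverse]] by fastforce
qed

locale thm6 =
  fixes d n :: nat and r :: int
  assumes d4: "d \<ge> 4" and deven: "even d" and gdr: "gcd (int d) r = 1"
    and n1: "n > 1" and ncong: "[int n = - r] (mod int d)" and nbig: "int n \<ge> max r (int d - r)"
begin

definition m1 :: int where "m1 = (int n + r) div int d"
definition N :: nat where "N = nat (int n - m1)"
definition c :: int where "c = (int d - 1) * int n"
definition ms :: nat where "ms = d div 2 - 1"

lemma dvd_nr: "int d dvd int n + r"
  using ncong by (simp add: cong_iff_dvd_diff)

lemma m1_eq: "int d * m1 = int n + r"
  unfolding m1_def using dvd_nr by simp

lemma r_le: "r \<le> int n" using nbig by simp
lemma dr_le: "int d - r \<le> int n" using nbig by simp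

lemma m1_ge1: "m1 \<ge> 1"
proof -
  have "int d * m1 \<ge> int d" using m1_eq dr_le by simp
  then show ?thesis using d4 by (simp add: mult_le_cancel_left1)
qed

lemma m1_le: "2 * m1 \<le> int n"
proof -
  have "int d * m1 \<le> 2 * int n" using m1_eq r_le by simp
  moreover have "4 * m1 \<le> int d * m1" using d4 m1_ge1 by (intro mult_right_mono) auto
  ultimately show ?thesis by simp
qed

lemma N_int: "int N = int n - m1"
  unfolding N_def using m1_le m1_ge1 by simp

lemma N_ge1: "N \<ge> 1" using N_int m1_le m1_ge1 n1 by simp

lemma N_less: "N < n" using N_int m1_ge1 by simp

lemma dN_c: "int d * int N + r = c"
  unfolding c_def N_int by (simp add: algebra_simps m1_eq)

lemma r_ne0: "r \<noteq> 0" using gdr d4 by auto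

lemma d_ndvd_r: "\<not> int d dvd r"
proof
  assume "int d dvd r"
  then have "int d dvd gcd (int d) r" by simp
  then show False using gdr d4 by simp
qed

lemma coprime_dn: "coprime (int d) (int n)"
proof (rule coprimeI)
  fix g assume g: "g dvd int d" "g dvd int n"
  then have "g dvd int d * m1 - int n" by simp
  then have "g dvd r" using m1_eq by simp
  then have "g dvd gcd (int d) r" using g by simp
  then show "is_unit g" using gdr by simp
qed

lemma n_ndvd_dj: assumes "0 < j" "j < int n" shows "\<not> int n dvd int d * j"
proof
  assume "int n dvd int d * j"
  then have "int n dvd j" using coprime_dn by (metis coprime_commute coprime_dvd_mult_right_iff)
  then show False using assms by (meson zdvd_not_zless)
qed

lemma d_ndvd_n: "\<not> int d dvd int n"
proof
  assume "int d dvd int n"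
  then have "is_unit (int d)" using coprime_dn by (metis coprime_common_divisor dvd_refl)
  then show False using d4 by simp
qed

lemma c_ne: "int d * j \<noteq> c"
proof
  assume h: "int d * j = c"
  then have "int d dvd (int d - 1) * int n" unfolding c_def by (metis dvd_triv_left)
  moreover have "coprime (int d) (int d - 1)"
  proof (rule coprimeI)
    fix g assume "g dvd int d" "g dvd int d - 1"
    then have "g dvd int d - (int d - 1)" by (rule dvd_diff)
    then show "is_unit g" by simp
  qed
  ultimately have "int d dvd int n" by (metis coprime_dvd_mult_right_iff)
  then show False using d_ndvd_n by simp
qed

lemma n_dvd_c: "int n dvd c" unfolding c_def by simp

lemma ms_bound: "int N > int ms * (m1 - 1)"
proof -
  obtain h where h: "d = 2 * h" using deven by auto
  then have msh: "int ms = int h - 1" unfolding ms_def using d4 by auto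
  have "2 * int h * m1 = int n + r" using m1_eq h by simp
  have "(int h - 1) * (m1 - 1) < int n - m1"
  proof -
    have "(int h - 1) * (m1 - 1) + m1 = int h * m1 - int h + 1" by (simp add: algebra_simps)
    also have "\<dots> = (int n + r) div 2 - int h + 1" using \<open>2 * int h * m1 = int n + r\<close> by simp
    finally have eq: "(int h - 1) * (m1 - 1) + m1 = (int n + r) div 2 - int h + 1" .
    have "(int n + r) div 2 \<le> int n" using r_le by simp
    moreover have "int h \<ge> 2" using h d4 by simp
    ultimately show ?thesis using eq by simp
  qed
  then show ?thesis using N_int msh by simp
qed


definition P :: ratfun where "P = qq (int d)"
definition A :: ratfun where "A = qq r"
definition sh :: "nat \<Rightarrow> int" where "sh i = (if i = 0 then c else 0)"
definition R1 :: "nat \<Rightarrow> ratfun" where "R1 i = qq (r + sh i)"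
definition R2 :: "nat \<Rightarrow> ratfun" where "R2 i = qq r"
definition L :: "nat \<Rightarrow> ratfun" where "L i = qq (int d - r - sh i)"

lemma n_dvd_sh: "int n dvd sh i" unfolding sh_def using n_dvd_c by simp

lemma n0: "n > 0" using n1 by simp

lemma P_pow: "P ^ k = qq (int d * int k)" unfolding P_def qq_pow by (simp add: mult.commute)

lemma hq: "1 - P ^ Suc i \<noteq> 0"
  unfolding P_pow using d4 by (intro one_minus_qq_ne0) simp

lemma ha: "1 - A * P * P ^ i \<noteq> 0"
proof -
  have eq: "A * P * P ^ i = qq (r + int d * (1 + int i))" unfolding P_pow unfolding A_def P_def qq_add by (simp add: algebra_simps)
  have "r + int d * (1 + int i) \<noteq> 0"
  proof
    assume "r + int d * (1 + int i) = 0"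
    then have "r = int d * (- (1 + int i))" by (simp add: algebra_simps)
    then show False using d_ndvd_r by (metis dvd_triv_left)
  qed
  then show ?thesis unfolding eq by (rule one_minus_qq_ne0)
qed

lemma h0: "1 - A \<noteq> 0" unfolding A_def using r_ne0 by (rule one_minus_qq_ne0)

lemma haq: "A * P = R1 i * R2 i * L i"
  unfolding A_def P_def R1_def R2_def L_def qq_add by (simp add: algebra_simps)

lemma R2L: "R2 i * L i = qq (int d - sh i)" unfolding R2_def L_def qq_add by simp
lemma R1L: "R1 i * L i = P" unfolding R1_def L_def P_def qq_add by simp

lemma h1: "1 - R2 i * L i * P ^ m \<noteq> 0"
proof -
  have eq: "R2 i * L i * P ^ m = qq (int d * (1 + int m) - sh i)" unfolding R2L P_pow qq_add by (simp add: algebra_simps)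
  have "int d * (1 + int m) - sh i \<noteq> 0"
    using c_ne[of "1 + int m"] d4 unfolding sh_def by auto
  then show ?thesis unfolding eq by (rule one_minus_qq_ne0)
qed

lemma h2: "1 - R1 i * L i * P ^ m \<noteq> 0"
  unfolding R1L using hq[of m] by simp

lemma bailey_main: "bet R1 R2 L A P i k = (\<Sum>j\<le>k. alph R1 R2 L A P i j / (qpoch P P (k - j) * qpoch (A * P) P (k + j)))"
  by (rule bailey_iter[OF hq ha h0 haq h1 h2])


lemma UU_P_qpoch: "k < n \<Longrightarrow> UU n (qpoch P P k)"
  unfolding P_def
proof (rule UU_qpoch[OF n0])
  fix j assume "k < n" "j < k"
  then show "\<not> int n dvd int d + int d * int j" using n_ndvd_dj[of "1 + int j"] by (simp add: algebra_simps)
qed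

lemma UU_shift_qpoch: assumes "k < n" "int n dvd s" shows "UU n (qpoch (qq (int d - s)) P k)"
  unfolding P_def
proof (rule UU_qpoch[OF n0])
  fix j assume "j < k"
  show "\<not> int n dvd int d - s + int d * int j"
  proof
    assume "int n dvd int d - s + int d * int j"
    then have "int n dvd int d - s + int d * int j + s" using assms(2) by (rule dvd_add)
    then have "int n dvd int d * (1 + int j)" by (simp add: algebra_simps)
    then show False using n_ndvd_dj[of "1 + int j"] \<open>j < k\<close> assms(1) by simp
  qed
qed

lemma UU_shift_qpoch': assumes "k < n" "int n dvd s" shows "UU n (qpoch (qq (int d + s)) P k)"
  using UU_shift_qpoch[OF assms(1), of "- s"] assms(2) by simp

lemma coef_DD:
  assumes "l \<le> j" "j \<le> N"
  shows "DD n 0 (qpoch (R1 i) P l * qpoch (R2 i) P l * qpoch (L i) P (j - l) * L i ^ l /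
     (qpoch P P (j - l) * qpoch (R2 i * L i) P j * qpoch (R1 i * L i) P j))"
    and "m1 \<le> int (j - l) \<Longrightarrow> DD n 1 (qpoch (R1 i) P l * qpoch (R2 i) P l * qpoch (L i) P (j - l) * L i ^ l /
     (qpoch P P (j - l) * qpoch (R2 i * L i) P j * qpoch (R1 i * L i) P j))"
proof -
  have jn: "j < n" using assms N_less by simp
  have UD: "UU n (qpoch P P (j - l) * qpoch (R2 i * L i) P j * qpoch (R1 i * L i) P j)"
    unfolding R2L R1L using jn
    by (intro UU_mult UU_P_qpoch UU_shift_qpoch n_dvd_sh) auto
  then have UDi: "DD n 0 (inverse (qpoch P P (j - l) * qpoch (R2 i * L i) P j * qpoch (R1 i * L i) P j))"
    by (intro UU_DD UU_inverse)
  have N12: "DD n 0 (qpoch (R1 i) P l * qpoch (R2 i) P l)"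
    unfolding R1_def R2_def P_def using DD_mult[OF DD0_qpoch DD0_qpoch] by simp
  have N4: "DD n 0 (L i ^ l)" unfolding L_def by (intro UU_DD UU_power UU_qv_powi)
  have N3: "DD n 0 (qpoch (L i) P (j - l))" unfolding L_def P_def by (rule DD0_qpoch)
  show "DD n 0 (qpoch (R1 i) P l * qpoch (R2 i) P l * qpoch (L i) P (j - l) * L i ^ l /
     (qpoch P P (j - l) * qpoch (R2 i * L i) P j * qpoch (R1 i * L i) P j))"
    unfolding divide_inverse using DD_mult[OF DD_mult[OF DD_mult[OF N12 N3] N4] UDi] by simp
  assume m: "m1 \<le> int (j - l)"
  have N3': "DD n 1 (qpoch (L i) P (j - l))"
    unfolding L_def P_def
  proof (rule DD1_qpoch[OF n0, of "nat (m1 - 1)"])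
    show "nat (m1 - 1) < j - l" using m m1_ge1 by linarith
    have e: "int (nat (m1 - 1)) = m1 - 1" using m1_ge1 by simp
    have "int d - r - sh i + int d * (m1 - 1) = int d * m1 - r - sh i" by (simp add: algebra_simps)
    also have "\<dots> = int n - sh i" using m1_eq by simp
    finally have eqn: "int d - r - sh i + int d * int (nat (m1 - 1)) = int n - sh i" unfolding e .
    show "int n dvd int d - r - sh i + int d * int (nat (m1 - 1))"
      unfolding eqn by (rule dvd_diff[OF dvd_refl n_dvd_sh])
  qed
  show "DD n 1 (qpoch (R1 i) P l * qpoch (R2 i) P l * qpoch (L i) P (j - l) * L i ^ l /
     (qpoch P P (j - l) * qpoch (R2 i * L i) P j * qpoch (R1 i * L i) P j))"
    unfolding divide_inverse using DD_mult[OF DD_mult[OF DD_mult[OF N12 N3'] N4] UDi] by simp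
qed

lemma bet_support:
  "i \<le> ms \<Longrightarrow> j \<le> N \<Longrightarrow> DD n 0 (bet R1 R2 L A P i j) \<and> (int i * (m1 - 1) < int j \<longrightarrow> DD n 1 (bet R1 R2 L A P i j))"
proof (induction i arbitrary: j)
  case 0
  then show ?case by (simp add: DD_one DD_zero)
next
  case (Suc i)
  let ?c = "\<lambda>l. qpoch (R1 i) P l * qpoch (R2 i) P l * qpoch (L i) P (j - l) * L i ^ l /
     (qpoch P P (j - l) * qpoch (R2 i * L i) P j * qpoch (R1 i * L i) P j)"
  have b: "bet R1 R2 L A P (Suc i) j = (\<Sum>l\<le>j. ?c l * bet R1 R2 L A P i l)" by simp
  have IH: "DD n 0 (bet R1 R2 L A P i l) \<and> (int i * (m1 - 1) < int l \<longrightarrow> DD n 1 (bet R1 R2 L A P i l))"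
    if "l \<le> j" for l using Suc that by simp
  have D0: "DD n 0 (bet R1 R2 L A P (Suc i) j)"
    unfolding b
  proof (rule DD_sum)
    fix l assume "l \<in> {..j}"
    then have "l \<le> j" by simp
    then show "DD n 0 (?c l * bet R1 R2 L A P i l)"
      using DD_mult[OF coef_DD(1)[OF _ Suc.prems(2)] conjunct1[OF IH]] by simp
  qed
  moreover have "DD n 1 (bet R1 R2 L A P (Suc i) j)" if jb: "int (Suc i) * (m1 - 1) < int j"
    unfolding b
  proof (rule DD_sum)
    fix l assume "l \<in> {..j}"
    then have lj: "l \<le> j" by simp
    show "DD n 1 (?c l * bet R1 R2 L A P i l)"
    proof (cases "int i * (m1 - 1) < int l")
      case True
      then have "DD n 1 (bet R1 R2 L A P i l)" using IH[OF lj] by simp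
      then show ?thesis using DD_mult[OF coef_DD(1)[OF lj Suc.prems(2)]] by fastforce
    next
      case False
      then have "m1 \<le> int (j - l)" using jb lj by (simp add: algebra_simps of_nat_diff)
      then have "DD n 1 (?c l)" by (rule coef_DD(2)[OF lj Suc.prems(2)])
      then show ?thesis using DD_mult[OF _ conjunct1[OF IH[OF lj]]] by fastforce
    qed
  qed
  ultimately show ?case by blast
qed

lemma bet_DD1: "DD n 1 (bet R1 R2 L A P ms N)"
  using bet_support[of ms N] ms_bound by simp


definition F0 :: "nat \<Rightarrow> ratfun" where
  "F0 k = qpoch (qq (r + c)) P k * qpoch A P k * qq (int d - r - c) ^ k / (qpoch (qq (int d - c)) P k * qpoch P P k)"
definition G :: "nat \<Rightarrow> ratfun" where
  "G k = qpoch A P k * qpoch A P k * qq (int d - r) ^ k / (qpoch P P k * qpoch P P k)"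

lemma alph_formula: "alph R1 R2 L A P (Suc i) k = alpha0 A P k * F0 k * G k ^ i"
proof (induction i)
  case 0
  have "R1 0 = qq (r + c)" "R2 0 = A" "L 0 = qq (int d - r - c)"
    unfolding R1_def R2_def L_def sh_def A_def by simp_all
  moreover have "R2 0 * L 0 = qq (int d - c)" using R2L[of 0] by (simp add: sh_def)
  moreover have "R1 0 * L 0 = P" by (rule R1L)
  ultimately show ?case unfolding F0_def by (simp add: mult.commute)
next
  case (Suc i)
  have "R1 (Suc i) = A" "R2 (Suc i) = A" "L (Suc i) = qq (int d - r)"
    unfolding R1_def R2_def L_def sh_def A_def by simp_all
  moreover have "R2 (Suc i) * L (Suc i) = P" using R2L[of "Suc i"] by (simp add: sh_def P_def)
  moreover have "R1 (Suc i) * L (Suc i) = P" by (rule R1L)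
  ultimately have "alph R1 R2 L A P (Suc (Suc i)) k = G k * alph R1 R2 L A P (Suc i) k"
    unfolding G_def by (subst alph.simps(2)) (simp del: alph.simps)
  then show ?case using Suc by (simp add: mult_ac del: alph.simps)
qed

lemma tri2: "Suc k * (Suc k - 1) div 2 = k * (k - 1) div 2 + k"
proof -
  have "Suc k * (Suc k - 1) = k * (k - 1) + 2 * k" by (cases k) (simp_all add: algebra_simps)
  then show ?thesis by simp
qed

lemma K1: "k \<le> N \<Longrightarrow> (-1) ^ k * P ^ (k * (k - 1) div 2) * qpoch P P N
     = qpoch P P (N - k) * qq (int d * int N * int k) * qpoch (qq (r - c)) P k"
proof (induction k)
  case 0
  then show ?case by simp
next
  case (Suc k)
  then have kN: "k < N" by simp
  have NS: "N - k = Suc (N - Suc k)" using kN by simp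
  have sc: "- (P ^ k) * (1 - P * P ^ (N - Suc k)) = qq (int d * int N) * (1 - qq (r - c) * P ^ k)"
  proof -
    have ex: "int d + int d * int (N - Suc k) = int d * int N - int d * int k"
      using kN by (simp add: algebra_simps of_nat_diff)
    have a: "P * P ^ (N - Suc k) = qq (int d * int N - int d * int k)"
      unfolding P_def qq_pow qq_add ex[symmetric] ..
    have ex2: "r - c + int d * int k = int d * int k - int d * int N" using dN_c by (simp add: algebra_simps)
    have b: "qq (r - c) * P ^ k = qq (int d * int k - int d * int N)"
      unfolding P_pow qq_add ex2 ..
    have e1: "P ^ k * qq (int d * int N - int d * int k) = qq (int d * int N)"
      unfolding P_pow qq_add by simp
    have e2: "qq (int d * int N) * qq (int d * int k - int d * int N) = P ^ k"
      unfolding P_pow qq_add by simp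
    show ?thesis unfolding a b by (simp add: algebra_simps e1 e2)
  qed
  have "(-1) ^ Suc k * P ^ (Suc k * (Suc k - 1) div 2) * qpoch P P N
      = - (P ^ k) * ((-1) ^ k * P ^ (k * (k - 1) div 2) * qpoch P P N)"
    unfolding tri2 by (simp add: power_add mult_ac)
  also have "\<dots> = - (P ^ k) * (qpoch P P (N - Suc k) * (1 - P * P ^ (N - Suc k)) * qq (int d * int N * int k) * qpoch (qq (r - c)) P k)"
    using Suc kN unfolding NS by (simp add: qpoch_Suc)
  also have "\<dots> = qpoch P P (N - Suc k) * qq (int d * int N * int k) * qpoch (qq (r - c)) P k * (- (P ^ k) * (1 - P * P ^ (N - Suc k)))"
    by (simp add: mult_ac)
  also have "\<dots> = qpoch P P (N - Suc k) * (qq (int d * int N * int k) * qq (int d * int N)) * (qpoch (qq (r - c)) P k * (1 - qq (r - c) * P ^ k))"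
    unfolding sc by (simp add: mult_ac)
  also have "\<dots> = qpoch P P (N - Suc k) * qq (int d * int N * int (Suc k)) * qpoch (qq (r - c)) P (Suc k)"
    unfolding qq_add qpoch_Suc by (simp add: algebra_simps)
  finally show ?case .
qed

lemma K2: "qpoch (A * P) P (N + k) = qpoch (A * P) P N * qpoch (qq (c + int d)) P k"
proof -
  have ex: "r + int d + int d * int N = c + int d" using dN_c by (simp add: algebra_simps)
  have "A * P * P ^ N = qq (c + int d)" unfolding A_def P_def qq_pow qq_add
    by (simp add: ex[symmetric] mult.commute)
  then show ?thesis using qpoch_add[of "A * P" P N k] by simp
qed

lemma K3: "qint r * (1 - A * P ^ (2 * k)) / (1 - A) = qint (2 * int d * int k + r)"
proof -
  have e: "A * P ^ (2 * k) = qq (2 * int d * int k + r)" unfolding A_def P_pow qq_add by (simp add: algebra_simps)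
  have g: "\<And>u v X :: ratfun. u \<noteq> 0 \<Longrightarrow> (u / v) * X / u = X / v" by (simp add: field_simps)
  show ?thesis unfolding qint_def e using g[OF h0[unfolded A_def]] by (simp add: A_def)
qed

lemma expo: "qq (int d * int N * int k) * qq (int d - r - c) ^ k * (qq (int d - r) ^ k) ^ (ms - 1)
   = qq (int d * (int d - r - 2) * int k div 2)"
proof -
  obtain h where h: "d = 2 * h" using deven by auto
  have h2: "h \<ge> 2" using h d4 by simp
  have "ms = h - 1" unfolding ms_def using h by simp
  then have msh: "int (ms - 1) = int h - 2" using h2 by simp
  have "int d * int N * int k + (int d - r - c) * int k + (int d - r) * int k * int (ms - 1)
      = int d * (int d - r - 2) * int k div 2"
  proof -
    have dN: "int d * int N = c - r" using dN_c by simp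
    have hd: "int d = 2 * int h" using h by simp
    have "int d * int N * int k + (int d - r - c) * int k + (int d - r) * int k * int (ms - 1)
        = int k * (int d * int N + int d - r - c + (int d - r) * (int h - 2))"
      unfolding msh by (simp add: algebra_simps)
    also have "\<dots> = int k * (int h * (2 * int h - r - 2))" unfolding dN unfolding hd by (simp add: algebra_simps)
    also have "\<dots> = (2 * (int h * (2 * int h - r - 2) * int k)) div 2"
    proof -
      have two: "\<And>Y::int. (2 * Y) div 2 = Y" by simp
      show ?thesis unfolding two by (simp add: mult_ac)
    qed
    also have "\<dots> = int d * (int d - r - 2) * int k div 2"
    proof -
      have "int d * (int d - r - 2) * int k = 2 * (int h * (2 * int h - r - 2) * int k)"
        unfolding hd by (simp add: algebra_simps)
      then show ?thesis by (simp only:)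
    qed
    finally show ?thesis .
  qed
  then show ?thesis unfolding qq_pow qq_add by (simp add: algebra_simps)
qed

definition W :: "nat \<Rightarrow> ratfun" where
  "W k = qint r * (qpoch P P N * qpoch (A * P) P N) * (alph R1 R2 L A P ms k / (qpoch P P (N - k) * qpoch (A * P) P (N + k)))"

lemma ms_Suc: "ms = Suc (ms - 1)" unfolding ms_def using d4 by simp

lemma W_formula:
  assumes "k \<le> N"
  shows "W k = qint (2 * int d * int k + r) * (qpoch A P k ^ (d - 2) * qpoch (qq (r + c)) P k * qpoch (qq (r - c)) P k /
      (qpoch P P k ^ (d - 2) * qpoch (qq (int d - c)) P k * qpoch (qq (c + int d)) P k)) * qq (int d * (int d - r - 2) * int k div 2)"
proof -
  have kn: "k < n" using assms N_less by simp
  have d2: "d - 2 = 2 + 2 * (ms - 1)" unfolding ms_def using d4 deven by auto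
  have nz_p1: "qpoch P P k \<noteq> 0" using UU_ne0[OF UU_P_qpoch[OF kn]] .
  have nz_pNk: "qpoch P P (N - k) \<noteq> 0" using UU_ne0[OF UU_P_qpoch] N_less by simp
  have nz_aN: "qpoch (A * P) P N \<noteq> 0" by (rule qpoch_ne0) (use ha in auto)
  have nz_cd: "qpoch (qq (c + int d)) P k \<noteq> 0"
    using UU_ne0[OF UU_shift_qpoch'[OF kn n_dvd_c]] by (simp add: add.commute)
  have nz_dc: "qpoch (qq (int d - c)) P k \<noteq> 0" using UU_ne0[OF UU_shift_qpoch[OF kn n_dvd_c]] .
  have nz_X: "1 - A * P ^ (2 * k) \<noteq> 0"
  proof -
    have eq: "A * P ^ (2 * k) = qq (r + int d * (2 * int k))" unfolding A_def P_pow qq_add by simp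
    have "r + int d * (2 * int k) \<noteq> 0"
    proof
      assume "r + int d * (2 * int k) = 0"
      then have "r = int d * (- (2 * int k))" by (simp add: algebra_simps)
      then show False using d_ndvd_r by (metis dvd_triv_left)
    qed
    then show ?thesis unfolding eq by (rule one_minus_qq_ne0)
  qed
  have "W k = qint r * (qpoch P P N * qpoch (A * P) P N) *
      (((1 - A * P ^ (2 * k)) * qpoch A P k / ((1 - A) * qpoch P P k) * (-1) ^ k * P ^ (k * (k - 1) div 2))
        * (qpoch (qq (r + c)) P k * qpoch A P k * qq (int d - r - c) ^ k / (qpoch (qq (int d - c)) P k * qpoch P P k))
        * (qpoch A P k * qpoch A P k * qq (int d - r) ^ k / (qpoch P P k * qpoch P P k)) ^ (ms - 1)
       / (qpoch P P (N - k) * qpoch (A * P) P (N + k)))"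
    unfolding W_def by (subst ms_Suc, unfold alph_formula alpha0_def F0_def G_def) (rule refl)
  also have "\<dots> = qint (2 * int d * int k + r) * (qpoch A P k ^ (2 + 2 * (ms - 1)) * qpoch (qq (r + c)) P k * qpoch (qq (r - c)) P k /
      (qpoch P P k ^ (2 + 2 * (ms - 1)) * qpoch (qq (int d - c)) P k * qpoch (qq (c + int d)) P k)) * qq (int d * (int d - r - 2) * int k div 2)"
    by (rule W_alg[OF h0 nz_p1 nz_pNk nz_aN nz_cd nz_dc _ _ nz_X _ _ K1[OF assms] K2 K3 expo])
       (simp_all add: P_def qq_ne0 power_not_zero qv_ne0)
  finally show ?thesis unfolding d2 .
qed


definition Sk :: "nat \<Rightarrow> ratfun" where
  "Sk k = qint (2 * int d * int k + r) * (qpoch A P k) ^ d / (qpoch P P k) ^ d * qq (int d * (int d - r - 2) * int k div 2)"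

lemma Sk_W: assumes "k \<le> N" shows "DD n 2 (Sk k - W k)"
proof -
  have kn: "k < n" using assms N_less by simp
  define a1 where "a1 = qpoch A P k"
  define p1 where "p1 = qpoch P P k"
  define rc where "rc = qpoch (qq (r + c)) P k"
  define rm where "rm = qpoch (qq (r - c)) P k"
  define dc where "dc = qpoch (qq (int d - c)) P k"
  define cd where "cd = qpoch (qq (c + int d)) P k"
  define q2 where "q2 = qint (2 * int d * int k + r)"
  define E where "E = qq (int d * (int d - r - 2) * int k div 2)"
  have dd: "d = (d - 2) + 2" using d4 by simp
  have Up1: "UU n p1" unfolding p1_def by (rule UU_P_qpoch[OF kn])
  have Udc: "UU n dc" unfolding dc_def by (rule UU_shift_qpoch[OF kn n_dvd_c])
  have Ucd: "UU n cd" unfolding cd_def using UU_shift_qpoch'[OF kn n_dvd_c] by (simp add: add.commute)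
  have "Sk k - W k = q2 * a1 ^ (d - 2 + 2) / p1 ^ (d - 2 + 2) * E - q2 * (a1 ^ (d - 2) * rc * rm / (p1 ^ (d - 2) * dc * cd)) * E"
    unfolding W_formula[OF assms] Sk_def a1_def p1_def rc_def rm_def dc_def cd_def q2_def E_def using dd by simp
  also have "\<dots> = q2 * E * (a1 ^ (d - 2) * inverse (p1 ^ (d - 2))) * ((a1 ^ 2 - rc * rm) * inverse (p1 ^ 2) + rc * rm * (inverse (p1 ^ 2) - inverse (dc * cd)))"
    by (rule Sdiff_alg) (use UU_ne0[OF Up1] UU_ne0[OF Udc] UU_ne0[OF Ucd] in auto)
  finally have eq: "Sk k - W k = q2 * E * (a1 ^ (d - 2) * inverse (p1 ^ (d - 2))) * ((a1 ^ 2 - rc * rm) * inverse (p1 ^ 2) + rc * rm * (inverse (p1 ^ 2) - inverse (dc * cd)))" .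
  have D1: "DD n 0 (q2 * E * (a1 ^ (d - 2) * inverse (p1 ^ (d - 2))))"
  proof -
    have x1: "DD n 0 q2" unfolding q2_def by (rule DD0_qint[OF n1])
    have x2: "DD n 0 E" unfolding E_def by (intro UU_DD UU_qv_powi)
    have x3: "DD n 0 (a1 ^ (d - 2))" unfolding a1_def A_def P_def using DD_power[OF DD0_qpoch[of n r "int d" k], of "d - 2"] by simp
    have x4: "DD n 0 (inverse (p1 ^ (d - 2)))" by (intro UU_DD UU_inverse UU_power Up1)
    show ?thesis using DD_mult[OF DD_mult[OF x1 x2] DD_mult[OF x3 x4]] by simp
  qed
  have D2: "DD n 2 (a1 ^ 2 - rc * rm)"
    unfolding a1_def rc_def rm_def A_def P_def by (rule pair_qpoch[OF n0 n_dvd_c])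
  have D3: "DD n 2 (p1 ^ 2 - dc * cd)"
  proof -
    have "dc * cd = qpoch (qq (int d + c)) (qq (int d)) k * qpoch (qq (int d - c)) (qq (int d)) k"
      unfolding dc_def cd_def P_def by (simp add: add.commute mult.commute)
    then show ?thesis unfolding p1_def P_def using pair_qpoch[OF n0 n_dvd_c, of "int d" "int d" k] by simp
  qed
  have D4: "DD n 2 (inverse (p1 ^ 2) - inverse (dc * cd))"
    by (rule DD_inverse_cong[OF UU_power[OF Up1] UU_mult[OF Udc Ucd] D3])
  have D5: "DD n 2 ((a1 ^ 2 - rc * rm) * inverse (p1 ^ 2) + rc * rm * (inverse (p1 ^ 2) - inverse (dc * cd)))"
  proof -
    have f1: "DD n (2 + 0) ((a1 ^ 2 - rc * rm) * inverse (p1 ^ 2))"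
      by (rule DD_mult[OF D2 UU_DD[OF UU_inverse[OF UU_power[OF Up1]]]])
    have r0: "DD n 0 (rc * rm)" unfolding rc_def rm_def P_def using DD_mult[OF DD0_qpoch DD0_qpoch] by simp
    have f2: "DD n (0 + 2) (rc * rm * (inverse (p1 ^ 2) - inverse (dc * cd)))"
      by (rule DD_mult[OF r0 D4])
    show ?thesis by (rule DD_add[OF f1[simplified add_0_right] f2[simplified add_0_left]])
  qed
  show ?thesis unfolding eq using DD_mult[OF D1 D5] by (simp only: add_0_left)
qed

lemma Sk_high: assumes "N < k" "k < n" shows "DD n 2 (Sk k)"
proof -
  have a1: "DD n 1 (qpoch A P k)" unfolding A_def P_def
  proof (rule DD1_qpoch[OF n0 assms(1)])
    have "r + int d * int N = c" using dN_c by simp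
    then show "int n dvd r + int d * int N" using n_dvd_c by simp
  qed
  have "DD n (1 * d) ((qpoch A P k) ^ d)" by (rule DD_power[OF a1])
  then have a2: "DD n 2 ((qpoch A P k) ^ d)" using DD_mono d4 by fastforce
  have "Sk k = qint (2 * int d * int k + r) * (qpoch A P k) ^ d * inverse ((qpoch P P k) ^ d) * qq (int d * (int d - r - 2) * int k div 2)"
    unfolding Sk_def by (simp add: divide_inverse)
  moreover have x1: "DD n 0 (qint (2 * int d * int k + r))" by (rule DD0_qint[OF n1])
  moreover have x3: "DD n 0 (inverse ((qpoch P P k) ^ d))" by (intro UU_DD UU_inverse UU_power UU_P_qpoch assms(2))
  moreover have x4: "DD n 0 (qq (int d * (int d - r - 2) * int k div 2))" by (intro UU_DD UU_qv_powi)
  ultimately show ?thesis using DD_mult[OF DD_mult[OF DD_mult[OF x1 a2] x3] x4] by (simp add: numeral_2_eq_2)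
qed

lemma sumW: "DD n 2 (\<Sum>k\<le>N. W k)"
proof -
  have "(\<Sum>k\<le>N. W k) = qint r * (qpoch P P N * qpoch (A * P) P N) * bet R1 R2 L A P ms N"
    unfolding W_def bailey_main[of ms N] by (simp add: sum_distrib_left)
  moreover have y1: "DD n 0 (qint r)" by (rule DD0_qint[OF n1])
  moreover have y2: "DD n 0 (qpoch P P N)" by (intro UU_DD UU_P_qpoch N_less)
  moreover have y3: "DD n 1 (qpoch (A * P) P N)"
  proof -
    have AP: "A * P = qq (r + int d)" unfolding A_def P_def qq_add ..
    have "DD n 1 (qpoch (qq (r + int d)) (qq (int d)) N)"
    proof (rule DD1_qpoch[OF n0, of "N - 1"])
      show "N - 1 < N" using N_ge1 by simp
      have "r + int d + int d * int (N - 1) = c" using dN_c N_ge1 by (simp add: algebra_simps of_nat_diff)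
      then show "int n dvd r + int d + int d * int (N - 1)" using n_dvd_c by simp
    qed
    then show ?thesis unfolding AP unfolding P_def .
  qed
  moreover have y4: "DD n 1 (bet R1 R2 L A P ms N)" by (rule bet_DD1)
  ultimately show ?thesis using DD_mult[OF DD_mult[OF y1 DD_mult[OF y2 y3]] y4] by (simp add: numeral_2_eq_2)
qed

lemma main: "DD n 2 (\<Sum>k<n. Sk k)"
proof -
  have split: "(\<Sum>k<n. Sk k) = (\<Sum>k\<le>N. Sk k) + (\<Sum>k\<in>{Suc N..<n}. Sk k)"
  proof -
    have "{..<n} = {..N} \<union> {Suc N..<n}" using N_less by auto
    moreover have "{..N} \<inter> {Suc N..<n} = {}" by auto
    ultimately show ?thesis by (simp add: sum.union_disjoint)
  qed
  have "(\<Sum>k\<le>N. Sk k) = (\<Sum>k\<le>N. Sk k - W k) + (\<Sum>k\<le>N. W k)" by (simp add: sum_subtractf)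
  moreover have "DD n 2 (\<Sum>k\<le>N. Sk k - W k)" by (rule DD_sum) (use Sk_W in auto)
  moreover have "DD n 2 (\<Sum>k\<in>{Suc N..<n}. Sk k)" by (rule DD_sum) (use Sk_high in auto)
  ultimately show ?thesis unfolding split
    by (metis DD_add sumW)
qed

end

theorem theorem6:
  fixes d n :: nat and r :: int
  assumes "d \<ge> 4" and "even d" and "gcd (int d) r = 1"
    and "n > 1" and "[int n = - r] (mod int d)" and "int n \<ge> max r (int d - r)"
  shows "fcong
     (\<Sum>k<n. qint (2 * int d * int k + r)
        * (qpoch (qv powi r) (qv powi int d) k) ^ d
        / (qpoch (qv powi int d) (qv powi int d) k) ^ d
        * qv powi (int d * (int d - r - 2) * int k div 2))
     0 ((cyclo n)\<^sup>2)"
proof -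
  interpret thm6 d n r using assms by unfold_locales
  have "DD n 2 (\<Sum>k<n. Sk k)" by (rule main)
  then have "DD n 2 (\<Sum>k<n. qint (2 * int d * int k + r)
        * (qpoch (qv powi r) (qv powi int d) k) ^ d
        / (qpoch (qv powi int d) (qv powi int d) k) ^ d
        * qv powi (int d * (int d - r - 2) * int k div 2))"
    unfolding Sk_def A_def P_def .
  then show ?thesis by (rule DD_fcong[OF n0])
qed


end
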